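(* There is an isomorphism of vector spaces $$\mathrm{End}_{\mathfrak p}(\mathbb W_1^{\otimes m})\cong\mathrm{Hom}_{\mathfrak{gl}(n)^{\oplus\ell}}(V^{\otimes m},\mathbb W_1^{\otimes m})=\bigoplus_{\vec\lambda\in\mathcal P_{m,\ell}}\mathrm{Hom}_{\mathfrak{gl}(n)^{\oplus\ell}}(V_{\vec\lambda}\boxtimes L_{\vec\lambda},\mathbb W_1^{\otimes m}),$$ given by restricting a $\mathfrak p$-endomorphism to the degree-zero part $V^{\otimes m}$.
   Context: Fix integers $\ell>1$, $n\ge m\ge1$; $\lceil i/n\rceil$ is the block index of $1\le i\le n\ell$. $\mathfrak p\subset\mathfrak{gl}(n\ell)\otimes\mathbb C[z]$ is the Lie subalgebra spanned by the $E_{ij}\otimes z^k$ ($k\ge0$) with $\lceil i/n\rceil-\lceil j/n\rceil+k\equiv0\pmod\ell$; its degree-zero part is $\mathfrak{gl}(n)^{\oplus\ell}$ embedded block diagonally. $V=\mathbb C^{n\ell}$, $\mathbb W_1=V\otimes\mathbb C[z]$ with the natural action, $\mathfrak p$ acting diagonally on $\mathbb W_1^{\otimes m}$. $\mathcal P_{m,\ell}$ is the set of $\ell$-tuples of partitions (at most $n$ parts) of total size $m$; $V_{\vec\lambda}$ is the outer tensor product of the polynomial irreducible $\mathfrak{gl}(n)$-modules with highest weights $\lambda^{(1)},\dots,\lambda^{(\ell)}$; $L_{\vec\lambda}$ is the irreducible $W=\mathfrak S_m\ltimes(\mathbb Z/\ell\mathbb Z)^m$-module induced from $\boxtimes_j(L_{\lambda^{(j)}}\otimes(\chi^{j-1})^{\boxtimes|\lambda^{(j)}|})$,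 where $\chi(a)=e^{2\pi\sqrt{-1}a/\ell}$ and $L_\mu$ is the irreducible symmetric group module with $L_{(1^r)}$ trivial and $L_{(r)}$ sign. The decomposition on the right uses the known $(\mathfrak{gl}(n)^{\oplus\ell},W)$-bimodule isomorphism $V^{\otimes m}\cong\bigoplus_{\vec\lambda}V_{\vec\lambda}\boxtimes L_{\vec\lambda}$, where $W$ acts on $V^{\otimes m}$ by permuting factors and by $(\mathbb Z/\ell\mathbb Z)$ acting on the $j$-th factor via $a.e_i=\chi(a)^{\lceil i/n\rceil-1}e_i$. *)

theory Defs
  imports Complex_Main "HOL-Library.FuncSet"
begin

text \<open>Basis of V = C^(n l): e_1 .. e_(n l).  Basis of
  W_1^(tensor m) = (V tensor C[z])^(tensor m): pairs (xs, ks) of lists of length m,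
  xs!p in {1..n l} the V-index and ks!p the z-exponent of the p-th tensor factor.
  Vectors are finitely supported coefficient functions on this basis.\<close>

type_synonym idx = "nat list \<times> nat list"

definition blk :: "nat \<Rightarrow> nat \<Rightarrow> nat" where
  "blk n i = nat \<lceil>real i / real n\<rceil>"

definition basisW :: "nat \<Rightarrow> nat \<Rightarrow> nat \<Rightarrow> idx set" where
  "basisW n l m = {(xs, ks). length xs = m \<and> length ks = m \<and> (\<forall>i\<in>set xs. 1 \<le> i \<and> i \<le> n * l)}"

definition Wm :: "nat \<Rightarrow> nat \<Rightarrow> nat \<Rightarrow> (idx \<Rightarrow> complex) set" where
  "Wm n l m = {w. finite {b. w b \<noteq> 0} \<and> (\<forall>b. w b \<noteq> 0 \<longrightarrow> b \<in> basisW n l m)}"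

definition V0 :: "nat \<Rightarrow> nat \<Rightarrow> nat \<Rightarrow> (idx \<Rightarrow> complex) set" where
  "V0 n l m = {w \<in> Wm n l m. \<forall>xs ks. w (xs, ks) \<noteq> 0 \<longrightarrow> (\<forall>k\<in>set ks. k = 0)}"

text \<open>Diagonal action of E_ij tensor z^k on W_1^(tensor m):
  e_(xs) z^(ks) maps to sum over p with xs!p = j of e_(xs[p:=i]) z^(ks[p := ks!p + k]).\<close>
definition act :: "nat \<Rightarrow> nat \<Rightarrow> nat \<Rightarrow> nat \<Rightarrow> (idx \<Rightarrow> complex) \<Rightarrow> (idx \<Rightarrow> complex)" where
  "act m i j k w = (\<lambda>(xs, ks). \<Sum>p<m. if xs ! p = i \<and> k \<le> ks ! p
                                  then w (xs[p := j], ks[p := ks ! p - k]) else 0)"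

text \<open>Spanning elements E_ij tensor z^k of the Lie algebra p.\<close>
definition p_gen :: "nat \<Rightarrow> nat \<Rightarrow> nat \<Rightarrow> nat \<Rightarrow> nat \<Rightarrow> bool" where
  "p_gen n l i j k \<longleftrightarrow> 1 \<le> i \<and> i \<le> n * l \<and> 1 \<le> j \<and> j \<le> n * l \<and>
     (int (blk n i) - int (blk n j) + int k) mod int l = 0"

text \<open>Spanning elements E_ij of gl(n)^(direct sum l), block diagonal.\<close>
definition gl_gen :: "nat \<Rightarrow> nat \<Rightarrow> nat \<Rightarrow> nat \<Rightarrow> bool" where
  "gl_gen n l i j \<longleftrightarrow> 1 \<le> i \<and> i \<le> n * l \<and> 1 \<le> j \<and> j \<le> n * l \<and> blk n i = blk n j"

definition lin_on :: "(idx \<Rightarrow> complex) set \<Rightarrow> ((idx \<Rightarrow> complex) \<Rightarrow> (idx \<Rightarrow> complex)) \<Rightarrow> bool" where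
  "lin_on A T \<longleftrightarrow> (\<forall>x\<in>A. \<forall>y\<in>A. \<forall>a c::complex.
      T (\<lambda>t. a * x t + c * y t) = (\<lambda>t. a * T x t + c * T y t))"

definition EndP :: "nat \<Rightarrow> nat \<Rightarrow> nat \<Rightarrow> ((idx \<Rightarrow> complex) \<Rightarrow> (idx \<Rightarrow> complex)) set" where
  "EndP n l m = {T \<in> extensional (Wm n l m). (\<forall>w\<in>Wm n l m. T w \<in> Wm n l m) \<and> lin_on (Wm n l m) T \<and>
     (\<forall>i j k w. p_gen n l i j k \<and> w \<in> Wm n l m \<longrightarrow> T (act m i j k w) = act m i j k (T w))}"

definition HomG :: "nat \<Rightarrow> nat \<Rightarrow> nat \<Rightarrow> ((idx \<Rightarrow> complex) \<Rightarrow> (idx \<Rightarrow> complex)) set" where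
  "HomG n l m = {S \<in> extensional (V0 n l m). (\<forall>v\<in>V0 n l m. S v \<in> Wm n l m) \<and> lin_on (V0 n l m) S \<and>
     (\<forall>i j v. gl_gen n l i j \<and> v \<in> V0 n l m \<longrightarrow> S (act m i j 0 v) = act m i j 0 (S v))}"

end

theory Submission
  imports Defs "HOL-Combinatorics.Permutations" "HOL-Library.Multiset"
begin

definition dl :: "idx \<Rightarrow> idx \<Rightarrow> complex" where
  "dl b = (\<lambda>t. if t = b then 1 else 0)"

definition wsupp :: "(idx \<Rightarrow> complex) \<Rightarrow> idx set" where
  "wsupp w = {b. w b \<noteq> 0}"

definition subsp :: "(idx \<Rightarrow> complex) set \<Rightarrow> bool" where
  "subsp A \<longleftrightarrow> (\<lambda>t. 0) \<in> A \<and> (\<forall>x\<in>A. \<forall>y\<in>A. \<forall>a c. (\<lambda>t. a * x t + c * y t) \<in> A)"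

lemma subsp_comb: "subsp A \<Longrightarrow> x \<in> A \<Longrightarrow> y \<in> A \<Longrightarrow> (\<lambda>t. a * x t + c * y t) \<in> A"
  unfolding subsp_def by blast

lemma lin_onD: "lin_on A T \<Longrightarrow> x \<in> A \<Longrightarrow> y \<in> A \<Longrightarrow> T (\<lambda>t. a * x t + c * y t) = (\<lambda>t. a * T x t + c * T y t)"
  unfolding lin_on_def by blast

lemma subsp_sum:
  assumes "subsp A" "finite F" "\<forall>b\<in>F. f b \<in> A"
  shows "(\<lambda>t. \<Sum>b\<in>F. a b * f b t) \<in> A"
  using assms(2,3)
proof (induction F rule: finite_induct)
  case empty then show ?case using assms(1) by (simp add: subsp_def)
next
  case (insert x F)
  have "(\<lambda>t. a x * f x t + 1 * (\<Sum>b\<in>F. a b * f b t)) \<in> A"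
    by (rule subsp_comb[OF assms(1)]) (use insert in auto)
  then show ?case using insert by simp
qed

lemma lin_zero:
  assumes "subsp A" "lin_on A T"
  shows "T (\<lambda>t. 0) = (\<lambda>t. 0)"
proof -
  have z: "(\<lambda>t. 0) \<in> A" using assms(1) by (simp add: subsp_def)
  have "T (\<lambda>t. 0 * (0::complex) + 0 * 0) = (\<lambda>t. 0 * T (\<lambda>t. 0) t + 0 * T (\<lambda>t. 0) t)"
    using lin_onD[OF assms(2) z z] .
  then show ?thesis by simp
qed

lemma lin_sum:
  assumes "subsp A" "lin_on A T" "finite F" "\<forall>b\<in>F. f b \<in> A"
  shows "T (\<lambda>t. \<Sum>b\<in>F. a b * f b t) = (\<lambda>t. \<Sum>b\<in>F. a b * T (f b) t)"
  using assms(3,4)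
proof (induction F rule: finite_induct)
  case empty then show ?case using lin_zero[OF assms(1,2)] by simp
next
  case (insert x F)
  have s: "(\<lambda>t. \<Sum>b\<in>F. a b * f b t) \<in> A" using subsp_sum[OF assms(1)] insert by auto
  have "T (\<lambda>t. a x * f x t + 1 * (\<Sum>b\<in>F. a b * f b t)) =
        (\<lambda>t. a x * T (f x) t + 1 * T (\<lambda>t. \<Sum>b\<in>F. a b * f b t) t)"
    by (rule lin_onD[OF assms(2)]) (use insert s in auto)
  then show ?case using insert by simp
qed

lemma lin_scale:
  assumes "lin_on A T" "x \<in> A"
  shows "T (\<lambda>t. a * x t) = (\<lambda>t. a * T x t)"
proof -
  have "T (\<lambda>t. a * x t + 0 * x t) = (\<lambda>t. a * T x t + 0 * T x t)"
    using lin_onD[OF assms(1,2,2)] .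
  then show ?thesis by simp
qed

lemma WmD: "w \<in> Wm n l m \<Longrightarrow> w b \<noteq> 0 \<Longrightarrow> b \<in> basisW n l m"
  unfolding Wm_def by blast

lemma WmD_fin: "w \<in> Wm n l m \<Longrightarrow> finite {b. w b \<noteq> 0}"
  unfolding Wm_def by blast

lemma WmI: "finite {b. w b \<noteq> 0} \<Longrightarrow> (\<And>b. w b \<noteq> 0 \<Longrightarrow> b \<in> basisW n l m) \<Longrightarrow> w \<in> Wm n l m"
  unfolding Wm_def by blast

lemma Wm_comb:
  assumes "x \<in> Wm n l m" "y \<in> Wm n l m"
  shows "(\<lambda>t. a * x t + c * y t) \<in> Wm n l m"
proof -
  have sub: "{b. a * x b + c * y b \<noteq> 0} \<subseteq> {b. x b \<noteq> 0} \<union> {b. y b \<noteq> 0}" by auto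
  have f1: "finite {b. x b \<noteq> 0}" "finite {b. y b \<noteq> 0}" using assms by (auto intro: WmD_fin)
  have fin: "finite {b. a * x b + c * y b \<noteq> 0}" using finite_subset[OF sub] f1 by blast
  have bas: "\<forall>b. a * x b + c * y b \<noteq> 0 \<longrightarrow> b \<in> basisW n l m"
  proof (intro allI impI)
    fix b assume "a * x b + c * y b \<noteq> 0"
    then have "x b \<noteq> 0 \<or> y b \<noteq> 0" by auto
    then show "b \<in> basisW n l m" using assms WmD by blast
  qed
  show ?thesis using fin bas by (intro WmI) auto
qed

lemma subsp_Wm: "subsp (Wm n l m)"
  unfolding subsp_def using Wm_comb[of _ n l m] by (auto intro: WmI)

lemma V0D: "v \<in> V0 n l m \<Longrightarrow> v (xs, ks) \<noteq> 0 \<Longrightarrow> k \<in> set ks \<Longrightarrow> k = 0"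
  unfolding V0_def by simp

lemma V0_Wm: "v \<in> V0 n l m \<Longrightarrow> v \<in> Wm n l m"
  unfolding V0_def by simp

lemma V0I: "v \<in> Wm n l m \<Longrightarrow> (\<And>xs ks k. v (xs, ks) \<noteq> 0 \<Longrightarrow> k \<in> set ks \<Longrightarrow> k = 0) \<Longrightarrow> v \<in> V0 n l m"
  unfolding V0_def by simp

lemma V0_comb:
  assumes "x \<in> V0 n l m" "y \<in> V0 n l m"
  shows "(\<lambda>t. a * x t + c * y t) \<in> V0 n l m"
proof (rule V0I)
  show "(\<lambda>t. a * x t + c * y t) \<in> Wm n l m" using Wm_comb V0_Wm assms by blast
  fix xs ks k assume h: "a * x (xs, ks) + c * y (xs, ks) \<noteq> 0" "k \<in> set ks"
  then have "x (xs, ks) \<noteq> 0 \<or> y (xs, ks) \<noteq> 0" by auto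
  then show "k = 0" using assms V0D h(2) by metis
qed

lemma subsp_V0: "subsp (V0 n l m)"
proof -
  have "(\<lambda>t. 0) \<in> Wm n l m" by (auto intro: WmI)
  then have "(\<lambda>t. 0) \<in> V0 n l m" by (rule V0I) simp
  then show ?thesis unfolding subsp_def using V0_comb[of _ n l m] by blast
qed

lemma V0_sub: "V0 n l m \<subseteq> Wm n l m" unfolding V0_def by auto

lemma decomp:
  assumes "w \<in> Wm n l m"
  shows "w = (\<lambda>t. \<Sum>b\<in>wsupp w. w b * dl b t)" "finite (wsupp w)" "wsupp w \<subseteq> basisW n l m"
proof -
  show f: "finite (wsupp w)" using assms WmD_fin unfolding wsupp_def by blast
  show "wsupp w \<subseteq> basisW n l m" using assms WmD unfolding wsupp_def by blast
  show "w = (\<lambda>t. \<Sum>b\<in>wsupp w. w b * dl b t)"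
  proof
    fix t
    have "(\<Sum>b\<in>wsupp w. w b * dl b t) = (\<Sum>b\<in>wsupp w. if b = t then w b else 0)"
      by (rule sum.cong) (simp_all add: dl_def eq_commute)
    also have "\<dots> = (if t \<in> wsupp w then w t else 0)" by (rule sum.delta[OF f])
    also have "\<dots> = w t" unfolding wsupp_def by simp
    finally show "w t = (\<Sum>b\<in>wsupp w. w b * dl b t)" by simp
  qed
qed

lemma dl_Wm: "b \<in> basisW n l m \<Longrightarrow> dl b \<in> Wm n l m"
proof (rule WmI)
  show "finite {t. dl b t \<noteq> 0}" by (simp add: dl_def)
  show "\<And>t. b \<in> basisW n l m \<Longrightarrow> dl b t \<noteq> 0 \<Longrightarrow> t \<in> basisW n l m" by (simp add: dl_def split: if_splits)
qed

lemma dl_V0: "(ys, ls) \<in> basisW n l m \<Longrightarrow> \<forall>k\<in>set ls. k = 0 \<Longrightarrow> dl (ys, ls) \<in> V0 n l m"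
  using dl_Wm[of "(ys,ls)" n l m] unfolding V0_def dl_def by simp

lemma act_sum:
  "act m i j k (\<lambda>t. \<Sum>b\<in>F. a b * f b t) = (\<lambda>t. \<Sum>b\<in>F. a b * act m i j k (f b) t)"
proof
  fix t :: idx
  obtain xs ks where t: "t = (xs, ks)" by (cases t)
  have "(\<Sum>b\<in>F. a b * (\<Sum>p<m. if xs ! p = i \<and> k \<le> ks ! p then f b (xs[p := j], ks[p := ks ! p - k]) else 0))
      = (\<Sum>p<m. \<Sum>b\<in>F. a b * (if xs ! p = i \<and> k \<le> ks ! p then f b (xs[p := j], ks[p := ks ! p - k]) else 0))"
    by (simp only: sum_distrib_left) (rule sum.swap)
  also have "\<dots> = (\<Sum>p<m. if xs ! p = i \<and> k \<le> ks ! p then (\<Sum>b\<in>F. a b * f b (xs[p := j], ks[p := ks ! p - k])) else 0)"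
    by (rule sum.cong) auto
  finally have eq: "(\<Sum>b\<in>F. a b * (\<Sum>p<m. if xs ! p = i \<and> k \<le> ks ! p then f b (xs[p := j], ks[p := ks ! p - k]) else 0))
     = (\<Sum>p<m. if xs ! p = i \<and> k \<le> ks ! p then (\<Sum>b\<in>F. a b * f b (xs[p := j], ks[p := ks ! p - k])) else 0)" .
  show "act m i j k (\<lambda>t. \<Sum>b\<in>F. a b * f b t) t = (\<Sum>b\<in>F. a b * act m i j k (f b) t)"
    unfolding t act_def prod.case by (rule eq[symmetric])
qed

lemma act_dl:
  assumes "length ys = m" "length ls = m"
  shows "act m i j k (dl (ys, ls)) = (\<lambda>t. \<Sum>p<m. if ys ! p = j then dl (ys[p := i], ls[p := ls ! p + k]) t else 0)"
proof
  fix t :: idx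
  obtain xs ks where t: "t = (xs, ks)" by (cases t)
  have "\<And>p. p < m \<Longrightarrow> (if xs ! p = i \<and> k \<le> ks ! p then dl (ys, ls) (xs[p := j], ks[p := ks ! p - k]) else 0)
     = (if ys ! p = j then dl (ys[p := i], ls[p := ls ! p + k]) (xs, ks) else 0)"
  proof -
    fix p assume p: "p < m"
    show "?thesis p"
    proof (cases "xs ! p = i \<and> k \<le> ks ! p \<and> xs[p := j] = ys \<and> ks[p := ks ! p - k] = ls")
      case True
      then have "length xs = m" "length ks = m" using assms by auto
      then have "ys ! p = j" "xs = ys[p:=i]" "ks = ls[p := ls ! p + k]" using True p by auto
      then show ?thesis using True by (auto simp: dl_def)
    next
      case False
      have "\<not> (ys ! p = j \<and> xs = ys[p := i] \<and> ks = ls[p := ls ! p + k])"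
      proof
        assume h: "ys ! p = j \<and> xs = ys[p := i] \<and> ks = ls[p := ls ! p + k]"
        then show False using False p assms by auto
      qed
      then show ?thesis using False by (auto simp: dl_def)
    qed
  qed
  then show "act m i j k (dl (ys, ls)) t = (\<Sum>p<m. if ys ! p = j then dl (ys[p := i], ls[p := ls ! p + k]) t else 0)"
    unfolding t act_def by simp
qed

lemma basisW_iff: "(ys, ls) \<in> basisW n l m \<longleftrightarrow> length ys = m \<and> length ls = m \<and> (\<forall>i\<in>set ys. 1 \<le> i \<and> i \<le> n * l)"
  unfolding basisW_def by simp

lemma basisW_upd:
  assumes "(ys, ls) \<in> basisW n l m" "1 \<le> i" "i \<le> n * l"
  shows "(ys[p := i], ls[p := c]) \<in> basisW n l m"
proof -
  have "set (ys[p := i]) \<subseteq> insert i (set ys)" by (rule set_update_subset_insert)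
  then show ?thesis using assms unfolding basisW_iff by auto
qed

lemma act_dl':
  assumes "(ys, ls) \<in> basisW n l m"
  shows "act m i j k (dl (ys, ls)) = (\<lambda>t. \<Sum>p<m. (if ys ! p = j then 1 else 0) * dl (ys[p := i], ls[p := ls ! p + k]) t)"
proof -
  have "length ys = m" "length ls = m" using assms unfolding basisW_iff by auto
  then have "act m i j k (dl (ys, ls)) = (\<lambda>t. \<Sum>p<m. if ys ! p = j then dl (ys[p := i], ls[p := ls ! p + k]) t else 0)"
    by (rule act_dl)
  also have "\<dots> = (\<lambda>t. \<Sum>p<m. (if ys ! p = j then 1 else 0) * dl (ys[p := i], ls[p := ls ! p + k]) t)"
    by (rule ext, rule sum.cong) auto
  finally show ?thesis .
qed

lemma act_dl_Wm:
  assumes "b \<in> basisW n l m" "1 \<le> i" "i \<le> n * l"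
  shows "act m i j k (dl b) \<in> Wm n l m"
proof -
  obtain ys ls where b: "b = (ys, ls)" by (cases b)
  show ?thesis unfolding b act_dl'[OF assms(1)[unfolded b]]
    by (rule subsp_sum[OF subsp_Wm]) (use basisW_upd[OF assms(1)[unfolded b] assms(2,3)] dl_Wm in auto)
qed

lemma act_Wm:
  assumes "w \<in> Wm n l m" "1 \<le> i" "i \<le> n * l"
  shows "act m i j k w \<in> Wm n l m"
proof -
  have "act m i j k w = act m i j k (\<lambda>t. \<Sum>b\<in>wsupp w. w b * dl b t)" using decomp(1)[OF assms(1)] by simp
  also have "\<dots> = (\<lambda>t. \<Sum>b\<in>wsupp w. w b * act m i j k (dl b) t)" by (rule act_sum)
  moreover have "\<forall>b\<in>wsupp w. act m i j k (dl b) \<in> Wm n l m" using decomp(3)[OF assms(1)] act_dl_Wm assms(2,3) by blast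
  then have "(\<lambda>t. \<Sum>b\<in>wsupp w. w b * act m i j k (dl b) t) \<in> Wm n l m"
    by (rule subsp_sum[OF subsp_Wm decomp(2)[OF assms(1)]])
  ultimately show ?thesis by simp
qed

lemma V0_supp:
  assumes "w \<in> V0 n l m" "w (ys, ls) \<noteq> 0"
  shows "(ys, ls) \<in> basisW n l m" "\<forall>k\<in>set ls. k = 0"
  using assms V0D[OF assms] WmD[OF V0_Wm[OF assms(1)]] by auto

lemma act_V0:
  assumes "w \<in> V0 n l m" "1 \<le> i" "i \<le> n * l"
  shows "act m i j 0 w \<in> V0 n l m"
proof -
  have w: "w \<in> Wm n l m" using assms(1) by (rule V0_Wm)
  have "act m i j 0 w = act m i j 0 (\<lambda>t. \<Sum>b\<in>wsupp w. w b * dl b t)" using decomp(1)[OF w] by simp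
  also have "\<dots> = (\<lambda>t. \<Sum>b\<in>wsupp w. w b * act m i j 0 (dl b) t)" by (rule act_sum)
  finally have eq: "act m i j 0 w = (\<lambda>t. \<Sum>b\<in>wsupp w. w b * act m i j 0 (dl b) t)" .
  have "act m i j 0 (dl b) \<in> V0 n l m" if b: "b \<in> wsupp w" for b
  proof -
    obtain ys ls where bb: "b = (ys, ls)" by (cases b)
    have wb: "w (ys, ls) \<noteq> 0" using b bb unfolding wsupp_def by simp
    note h = V0_supp[OF assms(1) wb]
    have "(ys[p := i], ls[p := ls ! p + 0]) \<in> basisW n l m" for p using basisW_upd[OF h(1) assms(2,3)] by blast
    moreover have "\<forall>k\<in>set (ls[p := ls ! p + 0]). k = 0" for p using h(2) by simp
    ultimately have "dl (ys[p := i], ls[p := ls ! p + 0]) \<in> V0 n l m" for p using dl_V0 by blast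
    then have "\<forall>p\<in>{..<m}. dl (ys[p := i], ls[p := ls ! p + 0]) \<in> V0 n l m" by blast
    then have "(\<lambda>t. \<Sum>p<m. (if ys ! p = j then 1 else 0) * dl (ys[p := i], ls[p := ls ! p + 0]) t) \<in> V0 n l m"
      by (rule subsp_sum[OF subsp_V0 finite_lessThan])
    then show ?thesis unfolding bb act_dl'[OF h(1)] .
  qed
  then have "\<forall>b\<in>wsupp w. act m i j 0 (dl b) \<in> V0 n l m" by blast
  then have "(\<lambda>t. \<Sum>b\<in>wsupp w. w b * act m i j 0 (dl b) t) \<in> V0 n l m"
    by (rule subsp_sum[OF subsp_V0 decomp(2)[OF w]])
  then show ?thesis unfolding eq .
qed

lemma blk_eq_iff:
  assumes "n > 0" "\<beta> \<ge> 1"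
  shows "blk n i = \<beta> \<longleftrightarrow> (\<beta> - 1) * n < i \<and> i \<le> \<beta> * n"
proof -
  have x0: "0 \<le> real i / real n" by simp
  have h: "0 \<le> \<lceil>real i / real n\<rceil>" using x0 by (metis ceiling_mono ceiling_zero)
  have "blk n i = \<beta> \<longleftrightarrow> \<lceil>real i / real n\<rceil> = int \<beta>"
    unfolding blk_def using h by (simp add: nat_eq_iff)
  also have "\<dots> \<longleftrightarrow> real_of_int (int \<beta>) - 1 < real i / real n \<and> real i / real n \<le> real_of_int (int \<beta>)"
    by (rule ceiling_eq_iff)
  also have "\<dots> \<longleftrightarrow> (real \<beta> - 1) * real n < real i \<and> real i \<le> real \<beta> * real n"
    using assms x0 by (simp add: field_simps)
  also have "\<dots> \<longleftrightarrow> (\<beta> - 1) * n < i \<and> i \<le> \<beta> * n"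
  proof -
    have "(real \<beta> - 1) * real n = real ((\<beta> - 1) * n)" using assms by (simp add: of_nat_diff)
    moreover have "real \<beta> * real n = real (\<beta> * n)" by simp
    ultimately show ?thesis by (simp only: of_nat_less_iff of_nat_le_iff)
  qed
  finally show ?thesis .
qed

lemma blk_range:
  assumes "n > 0" "1 \<le> i" "i \<le> n * l"
  shows "1 \<le> blk n i" "blk n i \<le> l"
proof -
  have "real i / real n > 0" using assms by simp
  then have "\<lceil>real i / real n\<rceil> > 0" using zero_less_ceiling by blast
  then show "1 \<le> blk n i" unfolding blk_def by linarith
  have "real i \<le> real n * real l" using assms(3) by (metis of_nat_le_iff of_nat_mult)
  then have "real i / real n \<le> real l" using assms(1) by (simp add: divide_le_eq mult.commute)
  then have "\<lceil>real i / real n\<rceil> \<le> int l" by (simp add: ceiling_le_iff)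
  then show "blk n i \<le> l" unfolding blk_def by linarith
qed

lemma fresh:
  assumes "n > 0" "1 \<le> \<beta>" "\<beta> \<le> l" "finite X" "card X < n"
  shows "\<exists>j. 1 \<le> j \<and> j \<le> n * l \<and> blk n j = \<beta> \<and> j \<notin> X"
proof -
  let ?B = "{(\<beta> - 1) * n <.. \<beta> * n}"
  have cB: "card ?B = n" using assms by (simp add: diff_mult_distrib)
  have "card ?B > card X" using cB assms by simp
  then have "\<not> ?B \<subseteq> X" using card_mono[OF assms(4)] by (meson leD)
  then obtain j where j: "j \<in> ?B" "j \<notin> X" by blast
  have bn: "\<beta> * n \<le> n * l" using assms by (simp add: mult.commute)
  have "j \<le> n * l" using j(1) bn by (meson greaterThanAtMost_iff order_trans)
  then have "1 \<le> j \<and> j \<le> n * l" using j(1) by auto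
  moreover have "blk n j = \<beta>" using j(1) blk_eq_iff[OF assms(1,2)] by auto
  ultimately show ?thesis using j(2) by blast
qed

lemma blk_mod_choice:
  assumes "l > 0" "B \<ge> 1"
  shows "(int B - int ((B + k - 1) mod l + 1) + int k) mod int l = 0"
proof -
  define s where "s = B + k - 1"
  have "int B + int k = int s + 1" using assms unfolding s_def by simp
  moreover have "int s = int (s mod l) + int l * int (s div l)"
    by (metis of_nat_add of_nat_mult mod_mult_div_eq add.commute mult.commute div_mult_mod_eq)
  ultimately have "int B - int (s mod l + 1) + int k = int l * int (s div l)" by simp
  then show ?thesis unfolding s_def by simp
qed

lemma EndPD:
  assumes "T \<in> EndP n l m"
  shows "T \<in> extensional (Wm n l m)" "\<And>w. w \<in> Wm n l m \<Longrightarrow> T w \<in> Wm n l m" "lin_on (Wm n l m) T"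
    "\<And>i j k w. p_gen n l i j k \<Longrightarrow> w \<in> Wm n l m \<Longrightarrow> T (act m i j k w) = act m i j k (T w)"
  using assms unfolding EndP_def by blast+

lemma HomGD:
  assumes "S \<in> HomG n l m"
  shows "S \<in> extensional (V0 n l m)" "\<And>v. v \<in> V0 n l m \<Longrightarrow> S v \<in> Wm n l m" "lin_on (V0 n l m) S"
    "\<And>i j v. gl_gen n l i j \<Longrightarrow> v \<in> V0 n l m \<Longrightarrow> S (act m i j 0 v) = act m i j 0 (S v)"
  using assms unfolding HomG_def by blast+

lemma gl_p_gen: "gl_gen n l i j \<Longrightarrow> p_gen n l i j 0"
  unfolding gl_gen_def p_gen_def by simp

lemma gl_gen_range: "gl_gen n l i j \<Longrightarrow> 1 \<le> i \<and> i \<le> n * l"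
  unfolding gl_gen_def by simp

lemma p_gen_range: "p_gen n l i j k \<Longrightarrow> 1 \<le> i \<and> i \<le> n * l \<and> 1 \<le> j \<and> j \<le> n * l"
  unfolding p_gen_def by simp

lemma lin_on_mono: "lin_on A T \<Longrightarrow> B \<subseteq> A \<Longrightarrow> subsp B \<Longrightarrow> lin_on B T"
  unfolding lin_on_def subsp_def by blast

lemma restr_HomG:
  assumes "T \<in> EndP n l m"
  shows "restrict T (V0 n l m) \<in> HomG n l m"
proof -
  note E = EndPD[OF assms]
  have a: "restrict T (V0 n l m) \<in> extensional (V0 n l m)" by simp
  have b: "\<forall>v\<in>V0 n l m. restrict T (V0 n l m) v \<in> Wm n l m" using E(2) V0_Wm by simp
  have c: "lin_on (V0 n l m) (restrict T (V0 n l m))"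
    unfolding lin_on_def
  proof (intro ballI allI)
    fix x y a c assume xy: "x \<in> V0 n l m" "y \<in> V0 n l m"
    have "(\<lambda>t. a * x t + c * y t) \<in> V0 n l m" by (rule V0_comb[OF xy])
    then show "restrict T (V0 n l m) (\<lambda>t. a * x t + c * y t) =
          (\<lambda>t. a * restrict T (V0 n l m) x t + c * restrict T (V0 n l m) y t)"
      using lin_onD[OF E(3) V0_Wm[OF xy(1)] V0_Wm[OF xy(2)]] xy by simp
  qed
  have d: "restrict T (V0 n l m) (act m i j 0 v) = act m i j 0 (restrict T (V0 n l m) v)"
    if "gl_gen n l i j" "v \<in> V0 n l m" for i j v
  proof -
    have "act m i j 0 v \<in> V0 n l m" using act_V0 that gl_gen_range by blast
    then show ?thesis using that E(4)[OF gl_p_gen[OF that(1)] V0_Wm[OF that(2)]] by simp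
  qed
  show ?thesis unfolding HomG_def using a b c d by blast
qed

lemma sum_single:
  assumes "p < (m::nat)" "\<And>r. r < m \<Longrightarrow> r \<noteq> p \<Longrightarrow> f r = 0"
  shows "(\<Sum>r<m. f r) = f p"
proof -
  have "(\<Sum>r<m. f r) = (\<Sum>r<m. if r = p then f p else 0)" by (rule sum.cong) (use assms in auto)
  also have "\<dots> = f p" using assms(1) by (subst sum.delta[OF finite_lessThan]) simp
  finally show ?thesis .
qed

lemma lift_basis:
  assumes n: "n > 0" "m \<le> n" and l: "l > 0" and xs: "(xs, ks) \<in> basisW n l m" and p: "p < m"
  obtains j where "p_gen n l (xs ! p) j (ks ! p)" "(xs[p := j], ks[p := 0]) \<in> basisW n l m"
    "act m (xs ! p) j (ks ! p) (dl (xs[p := j], ks[p := 0])) = dl (xs, ks)"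
proof -
  have len: "length xs = m" "length ks = m" and rng: "\<forall>i\<in>set xs. 1 \<le> i \<and> i \<le> n * l"
    using xs unfolding basisW_iff by auto
  have xp: "1 \<le> xs ! p" "xs ! p \<le> n * l" using rng p len by auto
  define B where "B = blk n (xs ! p)"
  have B: "1 \<le> B" "B \<le> l" using blk_range[OF n(1) xp] B_def by auto
  define \<beta> where "\<beta> = (B + ks ! p - 1) mod l + 1"
  have \<beta>: "1 \<le> \<beta>" "\<beta> \<le> l" using l unfolding \<beta>_def by (auto simp: Suc_le_eq)
  define X where "X = (\<lambda>r. xs ! r) ` ({..<m} - {p})"
  have fX: "finite X" unfolding X_def by simp
  have "card X \<le> card ({..<m} - {p})" unfolding X_def by (rule card_image_le) simp
  also have "\<dots> = m - 1" using p by simp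
  finally have cX: "card X < n" using n p by linarith
  obtain j where j: "1 \<le> j" "j \<le> n * l" "blk n j = \<beta>" "j \<notin> X" using fresh[OF n(1) \<beta> fX cX] by blast
  have pg: "p_gen n l (xs ! p) j (ks ! p)"
    unfolding p_gen_def using xp j blk_mod_choice[OF l B(1), of "ks ! p"] B_def \<beta>_def by simp
  have bw: "(xs[p := j], ks[p := 0]) \<in> basisW n l m" using basisW_upd[OF xs j(1,2)] .
  have "act m (xs ! p) j (ks ! p) (dl (xs[p := j], ks[p := 0])) =
    (\<lambda>t. \<Sum>r<m. if xs[p := j] ! r = j then dl ((xs[p := j])[r := xs ! p], (ks[p := 0])[r := ks[p := 0] ! r + ks ! p]) t else 0)"
    by (rule act_dl) (use len in auto)
  also have "\<dots> = dl (xs, ks)"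
  proof
    fix t
    have "(\<Sum>r<m. if xs[p := j] ! r = j then dl ((xs[p := j])[r := xs ! p], (ks[p := 0])[r := ks[p := 0] ! r + ks ! p]) t else 0)
      = (if xs[p := j] ! p = j then dl ((xs[p := j])[p := xs ! p], (ks[p := 0])[p := ks[p := 0] ! p + ks ! p]) t else 0)"
    proof (rule sum_single[OF p])
      fix r assume r: "r < m" "r \<noteq> p"
      have "xs ! r \<in> X" unfolding X_def using r by auto
      then have "xs ! r \<noteq> j" using j(4) by auto
      then show "(if xs[p := j] ! r = j then dl ((xs[p := j])[r := xs ! p], (ks[p := 0])[r := ks[p := 0] ! r + ks ! p]) t else 0) = 0"
        using r by simp
    qed
    also have "\<dots> = dl (xs, ks) t" using p len by simp
    finally show "(\<Sum>r<m. if xs[p := j] ! r = j then dl ((xs[p := j])[r := xs ! p], (ks[p := 0])[r := ks[p := 0] ! r + ks ! p]) t else 0) = dl (xs, ks) t" .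
  qed
  finally show ?thesis using that pg bw by blast
qed

lemma EndP_basis_eq:
  assumes n: "n > 0" "m \<le> n" and l: "l > 0"
    and T1: "T1 \<in> EndP n l m" and T2: "T2 \<in> EndP n l m"
    and eq: "restrict T1 (V0 n l m) = restrict T2 (V0 n l m)"
  shows "(xs, ks) \<in> basisW n l m \<Longrightarrow> T1 (dl (xs, ks)) = T2 (dl (xs, ks))"
proof (induction "sum_list ks" arbitrary: xs ks rule: less_induct)
  case less
  show ?case
  proof (cases "\<forall>k\<in>set ks. k = 0")
    case True
    then have "dl (xs, ks) \<in> V0 n l m" using dl_V0 less.prems by blast
    then show ?thesis using fun_cong[OF eq, of "dl (xs, ks)"] by simp
  next
    case False
    then obtain p where p: "p < length ks" "ks ! p \<noteq> 0" by (auto simp: in_set_conv_nth)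
    have len: "length ks = m" using less.prems unfolding basisW_iff by auto
    obtain j where j: "p_gen n l (xs ! p) j (ks ! p)" "(xs[p := j], ks[p := 0]) \<in> basisW n l m"
      "act m (xs ! p) j (ks ! p) (dl (xs[p := j], ks[p := 0])) = dl (xs, ks)"
      using lift_basis[OF n l less.prems, of p] p len by auto
    have "sum_list (ks[p := 0]) = sum_list ks - ks ! p" using sum_list_update[OF p(1), of 0] by simp
    moreover have "ks ! p \<le> sum_list ks" using elem_le_sum_list[OF p(1)] .
    ultimately have lt: "sum_list (ks[p := 0]) < sum_list ks" using p(2) by linarith
    have ih: "T1 (dl (xs[p := j], ks[p := 0])) = T2 (dl (xs[p := j], ks[p := 0]))"
      using less.hyps[OF lt j(2)] .
    have w: "dl (xs[p := j], ks[p := 0]) \<in> Wm n l m" using dl_Wm[OF j(2)] .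
    have "T1 (dl (xs, ks)) = T1 (act m (xs ! p) j (ks ! p) (dl (xs[p := j], ks[p := 0])))" using j(3) by simp
    also have "\<dots> = act m (xs ! p) j (ks ! p) (T1 (dl (xs[p := j], ks[p := 0])))" using EndPD(4)[OF T1 j(1) w] .
    also have "\<dots> = act m (xs ! p) j (ks ! p) (T2 (dl (xs[p := j], ks[p := 0])))" using ih by simp
    also have "\<dots> = T2 (act m (xs ! p) j (ks ! p) (dl (xs[p := j], ks[p := 0])))" using EndPD(4)[OF T2 j(1) w] by simp
    also have "\<dots> = T2 (dl (xs, ks))" using j(3) by simp
    finally show ?thesis .
  qed
qed

lemma EndP_inj:
  assumes n: "n > 0" "m \<le> n" and l: "l > 0"
    and T1: "T1 \<in> EndP n l m" and T2: "T2 \<in> EndP n l m"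
    and eq: "restrict T1 (V0 n l m) = restrict T2 (V0 n l m)"
  shows "T1 = T2"
proof (rule extensionalityI[OF EndPD(1)[OF T1] EndPD(1)[OF T2]])
  fix w assume w: "w \<in> Wm n l m"
  have bs: "\<forall>b\<in>wsupp w. dl b \<in> Wm n l m" using decomp(3)[OF w] dl_Wm by blast
  have e: "\<forall>b\<in>wsupp w. T1 (dl b) = T2 (dl b)"
  proof
    fix b assume "b \<in> wsupp w"
    then have "b \<in> basisW n l m" using decomp(3)[OF w] by blast
    then show "T1 (dl b) = T2 (dl b)" using EndP_basis_eq[OF n l T1 T2 eq] by (cases b) simp
  qed
  have "T1 w = T1 (\<lambda>t. \<Sum>b\<in>wsupp w. w b * dl b t)" using decomp(1)[OF w] by simp
  also have "\<dots> = (\<lambda>t. \<Sum>b\<in>wsupp w. w b * T1 (dl b) t)"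
    by (rule lin_sum[OF subsp_Wm EndPD(3)[OF T1] decomp(2)[OF w] bs])
  also have "\<dots> = (\<lambda>t. \<Sum>b\<in>wsupp w. w b * T2 (dl b) t)" using e by simp
  also have "\<dots> = T2 (\<lambda>t. \<Sum>b\<in>wsupp w. w b * dl b t)"
    by (rule lin_sum[OF subsp_Wm EndPD(3)[OF T2] decomp(2)[OF w] bs, symmetric])
  also have "\<dots> = T2 w" using decomp(1)[OF w] by simp
  finally show "T1 w = T2 w" .
qed

definition Hc :: "((idx \<Rightarrow> complex) \<Rightarrow> (idx \<Rightarrow> complex)) \<Rightarrow> nat \<Rightarrow> nat list \<Rightarrow> (nat \<Rightarrow> nat) \<Rightarrow> idx \<Rightarrow> idx \<Rightarrow> complex" where
  "Hc S m V \<sigma> b t = (if fst t = permute_list \<sigma> (fst b) \<and> length (snd t) = m \<and> (\<forall>r<m. snd b ! \<sigma> r \<le> snd t ! r)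
     then S (dl (V, replicate m 0)) (permute_list \<sigma> V, map (\<lambda>r. snd t ! r - snd b ! \<sigma> r) [0..<m]) else 0)"

lemma TW:
  assumes \<sigma>: "\<sigma> permutes {..<m}" and q: "q < m" and len: "length ys = m" "length ls = m"
  shows "(if ys ! \<sigma> q = j then Hc S m V \<sigma> (ys[\<sigma> q := i], ls[\<sigma> q := ls ! \<sigma> q + k]) (xs, ks) else 0)
       = (if xs ! q = i \<and> k \<le> ks ! q then Hc S m V \<sigma> (ys, ls) (xs[q := j], ks[q := ks ! q - k]) else 0)"
proof -
  define p where "p = \<sigma> q"
  have sr: "\<And>r. r < m \<Longrightarrow> \<sigma> r < m" using permutes_in_image[OF \<sigma>] by simp
  have p: "p < m" using sr q p_def by simp
  have inj: "\<And>r. \<sigma> r = p \<longleftrightarrow> r = q" unfolding p_def using permutes_inj[OF \<sigma>] by (simp add: inj_eq)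
  have pl: "\<And>zs r. length zs = m \<Longrightarrow> r < m \<Longrightarrow> permute_list \<sigma> zs ! r = zs ! \<sigma> r"
    using \<sigma> by (simp add: permute_list_nth)
  define LC where "LC = (ys ! p = j \<and> xs = permute_list \<sigma> (ys[p := i]) \<and> length ks = m \<and> (\<forall>r<m. ls[p := ls ! p + k] ! \<sigma> r \<le> ks ! r))"
  define RC where "RC = (xs ! q = i \<and> k \<le> ks ! q \<and> xs[q := j] = permute_list \<sigma> ys \<and> length (ks[q := ks ! q - k]) = m \<and> (\<forall>r<m. ls ! \<sigma> r \<le> ks[q := ks ! q - k] ! r))"
  have L: "(if ys ! \<sigma> q = j then Hc S m V \<sigma> (ys[\<sigma> q := i], ls[\<sigma> q := ls ! \<sigma> q + k]) (xs, ks) else 0)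
     = (if LC then S (dl (V, replicate m 0)) (permute_list \<sigma> V, map (\<lambda>r. ks ! r - ls[p := ls ! p + k] ! \<sigma> r) [0..<m]) else 0)"
    unfolding Hc_def LC_def p_def[symmetric] by auto
  have R: "(if xs ! q = i \<and> k \<le> ks ! q then Hc S m V \<sigma> (ys, ls) (xs[q := j], ks[q := ks ! q - k]) else 0)
     = (if RC then S (dl (V, replicate m 0)) (permute_list \<sigma> V, map (\<lambda>r. ks[q := ks ! q - k] ! r - ls ! \<sigma> r) [0..<m]) else 0)"
    unfolding Hc_def RC_def by auto
  have LR: "LC \<Longrightarrow> RC"
  proof -
    assume h: LC
    have lxs: "length xs = m" using h len unfolding LC_def by simp
    have lk: "length ks = m" using h unfolding LC_def by simp
    have xsr: "\<And>r. r < m \<Longrightarrow> xs ! r = (if \<sigma> r = p then i else ys ! \<sigma> r)"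
      using h pl[of "ys[p := i]"] len sr p unfolding LC_def by (simp add: nth_list_update)
    have lsr: "\<And>r. r < m \<Longrightarrow> ls[p := ls ! p + k] ! \<sigma> r \<le> ks ! r" using h unfolding LC_def by simp
    have c1: "xs ! q = i" using xsr[OF q] inj by simp
    have c2: "ls ! p + k \<le> ks ! q" using lsr[OF q] len p p_def by simp
    have c3: "xs[q := j] = permute_list \<sigma> ys"
    proof (rule nth_equalityI)
      show "length (xs[q := j]) = length (permute_list \<sigma> ys)" using lxs len by simp
      fix r assume "r < length (xs[q := j])"
      then have r: "r < m" using lxs by simp
      show "xs[q := j] ! r = permute_list \<sigma> ys ! r"
        using xsr[OF r] inj[of r] pl[OF len(1) r] h lxs r unfolding LC_def p_def by (auto simp: nth_list_update)
    qed
    have c4: "\<forall>r<m. ls ! \<sigma> r \<le> ks[q := ks ! q - k] ! r"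
    proof (intro allI impI)
      fix r assume r: "r < m"
      show "ls ! \<sigma> r \<le> ks[q := ks ! q - k] ! r"
      proof (cases "r = q")
        case True then show ?thesis using c2 lk q p_def by simp
      next
        case False
        then have "\<sigma> r \<noteq> p" using inj by simp
        then show ?thesis using lsr[OF r] False len by simp
      qed
    qed
    show RC unfolding RC_def using c1 c2 c3 c4 lk by simp
  qed
  have RL: "RC \<Longrightarrow> LC"
  proof -
    assume h: RC
    have lk: "length ks = m" using h unfolding RC_def by simp
    have lxs: "length xs = m" using h len unfolding RC_def by (metis length_list_update length_permute_list)
    have e: "\<And>r. r < m \<Longrightarrow> xs[q := j] ! r = ys ! \<sigma> r" using h pl[OF len(1)] unfolding RC_def by simp
    have c1: "ys ! p = j" using e[OF q] lxs q p_def by simp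
    have c2: "xs = permute_list \<sigma> (ys[p := i])"
    proof (rule nth_equalityI)
      show "length xs = length (permute_list \<sigma> (ys[p := i]))" using lxs len by simp
      fix r assume "r < length xs"
      then have r: "r < m" using lxs by simp
      show "xs ! r = permute_list \<sigma> (ys[p := i]) ! r"
      proof (cases "r = q")
        case True then show ?thesis using h pl[of "ys[p := i]" r] len r p p_def unfolding RC_def by simp
      next
        case False
        then have "\<sigma> r \<noteq> p" using inj by simp
        then show ?thesis using e[OF r] False pl[of "ys[p := i]" r] len r lxs by simp
      qed
    qed
    have c3: "\<forall>r<m. ls[p := ls ! p + k] ! \<sigma> r \<le> ks ! r"
    proof (intro allI impI)
      fix r assume r: "r < m"
      have hr: "ls ! \<sigma> r \<le> ks[q := ks ! q - k] ! r" using h r unfolding RC_def by simp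
      show "ls[p := ls ! p + k] ! \<sigma> r \<le> ks ! r"
      proof (cases "r = q")
        case True then show ?thesis using hr h lk q len p p_def unfolding RC_def by auto
      next
        case False
        then have "\<sigma> r \<noteq> p" using inj by simp
        then show ?thesis using hr False lk by simp
      qed
    qed
    show LC unfolding LC_def using c1 c2 c3 lk by simp
  qed
  have cs: "LC \<Longrightarrow> map (\<lambda>r. ks ! r - ls[p := ls ! p + k] ! \<sigma> r) [0..<m] = map (\<lambda>r. ks[q := ks ! q - k] ! r - ls ! \<sigma> r) [0..<m]"
  proof -
    assume h: LC
    have lk: "length ks = m" using h unfolding LC_def by simp
    show ?thesis
    proof (rule map_cong[OF refl])
      fix r assume "r \<in> set [0..<m]"
      then have r: "r < m" by simp
      show "ks ! r - ls[p := ls ! p + k] ! \<sigma> r = ks[q := ks ! q - k] ! r - ls ! \<sigma> r"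
      proof (cases "r = q")
        case True then show ?thesis using lk q len p p_def by simp
      next
        case False
        then have "\<sigma> r \<noteq> p" using inj by simp
        then show ?thesis using False len by simp
      qed
    qed
  qed
  have M: "(if LC then S (dl (V, replicate m 0)) (permute_list \<sigma> V, map (\<lambda>r. ks ! r - ls[p := ls ! p + k] ! \<sigma> r) [0..<m]) else 0)
     = (if RC then S (dl (V, replicate m 0)) (permute_list \<sigma> V, map (\<lambda>r. ks[q := ks ! q - k] ! r - ls ! \<sigma> r) [0..<m]) else 0)"
  proof (cases LC)
    case True
    then have rc: RC by (rule LR)
    show ?thesis by (simp only: True rc cs[OF True] if_True)
  next
    case False
    then have "\<not> RC" using RL by blast
    then show ?thesis using False by simp
  qed
  show ?thesis by (rule trans[OF L trans[OF M R[symmetric]]])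
qed

definition bt :: "nat \<Rightarrow> nat \<Rightarrow> nat" where "bt l r = (if r = 0 then l else r)"
definition vv :: "nat \<Rightarrow> nat \<Rightarrow> nat list \<Rightarrow> nat list" where
  "vv n l \<rho> = map (\<lambda>p. (bt l (\<rho> ! p) - 1) * n + p + 1) [0..<length \<rho>]"
definition rho :: "nat \<Rightarrow> nat \<Rightarrow> nat \<Rightarrow> idx \<Rightarrow> nat list" where
  "rho n l m b = map (\<lambda>p. (blk n (fst b ! p) + snd b ! p) mod l) [0..<m]"
definition Kf :: "((idx \<Rightarrow> complex) \<Rightarrow> (idx \<Rightarrow> complex)) \<Rightarrow> nat \<Rightarrow> nat \<Rightarrow> nat \<Rightarrow> idx \<Rightarrow> idx \<Rightarrow> complex" where
  "Kf S n l m b t = (\<Sum>\<sigma>\<in>{\<sigma>. \<sigma> permutes {..<m}}. Hc S m (vv n l (rho n l m b)) \<sigma> b t)"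

lemma mod_shift:
  assumes "(int a - int b + int k) mod int l = 0"
  shows "(a + c + k) mod l = (b + c) mod l"
proof -
  have "int l dvd (int a - int b + int k)" using assms by presburger
  then have "int l dvd (int (a + c + k) - int (b + c))" by (simp add: algebra_simps)
  then have "int (a + c + k) mod int l = int (b + c) mod int l" by (simp add: mod_eq_dvd_iff)
  then show ?thesis by (metis of_nat_eq_iff of_nat_mod)
qed

lemma rho_inv:
  assumes "p < m" "length ys = m" "length ls = m" "ys ! p = j" "p_gen n l i j k"
  shows "rho n l m (ys[p := i], ls[p := ls ! p + k]) = rho n l m (ys, ls)"
proof -
  have pg: "(int (blk n i) - int (blk n j) + int k) mod int l = 0" using assms(5) unfolding p_gen_def by simp
  show ?thesis unfolding rho_def
  proof (rule map_cong[OF refl])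
    fix r assume "r \<in> set [0..<m]"
    then have r: "r < m" by simp
    show "(blk n (fst (ys[p := i], ls[p := ls ! p + k]) ! r) + snd (ys[p := i], ls[p := ls ! p + k]) ! r) mod l =
          (blk n (fst (ys, ls) ! r) + snd (ys, ls) ! r) mod l"
    proof (cases "r = p")
      case True
      then show ?thesis using assms mod_shift[OF pg, of "ls ! p"] by (simp add: add.assoc add.commute add.left_commute)
    next
      case False then show ?thesis by simp
    qed
  qed
qed

lemma K6:
  assumes len: "length ys = m" "length ls = m" and pg: "p_gen n l i j k"
  shows "(\<lambda>t. \<Sum>p<m. (if ys ! p = j then 1 else 0) * Kf S n l m (ys[p := i], ls[p := ls ! p + k]) t)
        = act m i j k (Kf S n l m (ys, ls))"
proof
  fix t :: idx
  obtain xs ks where t: "t = (xs, ks)" by (cases t)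
  define V where "V = vv n l (rho n l m (ys, ls))"
  define P where "P = {\<sigma>. \<sigma> permutes {..<m}}"
  have fP: "finite P" unfolding P_def by (simp add: finite_permutations)
  have step1: "\<And>p. p < m \<Longrightarrow> (if ys ! p = j then 1 else 0) * Kf S n l m (ys[p := i], ls[p := ls ! p + k]) t
       = (\<Sum>\<sigma>\<in>P. if ys ! p = j then Hc S m V \<sigma> (ys[p := i], ls[p := ls ! p + k]) t else 0)"
  proof -
    fix p assume p: "p < m"
    show "?thesis p"
    proof (cases "ys ! p = j")
      case True
      then have "rho n l m (ys[p := i], ls[p := ls ! p + k]) = rho n l m (ys, ls)"
        using rho_inv[OF p len True pg] by simp
      then show ?thesis using True unfolding Kf_def V_def P_def by simp
    next
      case False then show ?thesis by simp
    qed
  qed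
  have "(\<Sum>p<m. (if ys ! p = j then 1 else 0) * Kf S n l m (ys[p := i], ls[p := ls ! p + k]) t)
      = (\<Sum>p<m. \<Sum>\<sigma>\<in>P. if ys ! p = j then Hc S m V \<sigma> (ys[p := i], ls[p := ls ! p + k]) t else 0)"
    by (rule sum.cong[OF refl]) (simp add: step1)
  also have "\<dots> = (\<Sum>\<sigma>\<in>P. \<Sum>p<m. if ys ! p = j then Hc S m V \<sigma> (ys[p := i], ls[p := ls ! p + k]) t else 0)"
    by (rule sum.swap)
  also have "\<dots> = (\<Sum>\<sigma>\<in>P. \<Sum>q<m. if ys ! \<sigma> q = j then Hc S m V \<sigma> (ys[\<sigma> q := i], ls[\<sigma> q := ls ! \<sigma> q + k]) t else 0)"
  proof (rule sum.cong[OF refl])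
    fix \<sigma> assume "\<sigma> \<in> P"
    then have s: "\<sigma> permutes {..<m}" unfolding P_def by simp
    show "(\<Sum>p<m. if ys ! p = j then Hc S m V \<sigma> (ys[p := i], ls[p := ls ! p + k]) t else 0)
       = (\<Sum>q<m. if ys ! \<sigma> q = j then Hc S m V \<sigma> (ys[\<sigma> q := i], ls[\<sigma> q := ls ! \<sigma> q + k]) t else 0)"
      using sum.permute[OF s, of "\<lambda>p. if ys ! p = j then Hc S m V \<sigma> (ys[p := i], ls[p := ls ! p + k]) t else 0"]
      by (simp add: comp_def)
  qed
  also have "\<dots> = (\<Sum>\<sigma>\<in>P. \<Sum>q<m. if xs ! q = i \<and> k \<le> ks ! q then Hc S m V \<sigma> (ys, ls) (xs[q := j], ks[q := ks ! q - k]) else 0)"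
  proof (rule sum.cong[OF refl])
    fix \<sigma> assume "\<sigma> \<in> P"
    then have s: "\<sigma> permutes {..<m}" unfolding P_def by simp
    show "(\<Sum>q<m. if ys ! \<sigma> q = j then Hc S m V \<sigma> (ys[\<sigma> q := i], ls[\<sigma> q := ls ! \<sigma> q + k]) t else 0)
       = (\<Sum>q<m. if xs ! q = i \<and> k \<le> ks ! q then Hc S m V \<sigma> (ys, ls) (xs[q := j], ks[q := ks ! q - k]) else 0)"
    proof (rule sum.cong[OF refl])
      fix q assume "q \<in> {..<m}"
      then have q: "q < m" by simp
      show "(if ys ! \<sigma> q = j then Hc S m V \<sigma> (ys[\<sigma> q := i], ls[\<sigma> q := ls ! \<sigma> q + k]) t else 0)
         = (if xs ! q = i \<and> k \<le> ks ! q then Hc S m V \<sigma> (ys, ls) (xs[q := j], ks[q := ks ! q - k]) else 0)"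
        unfolding t by (rule TW[OF s q len])
    qed
  qed
  also have "\<dots> = (\<Sum>q<m. \<Sum>\<sigma>\<in>P. if xs ! q = i \<and> k \<le> ks ! q then Hc S m V \<sigma> (ys, ls) (xs[q := j], ks[q := ks ! q - k]) else 0)"
    by (rule sum.swap)
  also have "\<dots> = act m i j k (Kf S n l m (ys, ls)) t"
    unfolding t act_def Kf_def V_def P_def by (simp, rule sum.cong[OF refl], auto)
  finally show "(\<Sum>p<m. (if ys ! p = j then 1 else 0) * Kf S n l m (ys[p := i], ls[p := ls ! p + k]) t) =
         act m i j k (Kf S n l m (ys, ls)) t" .
qed

lemma bt_props:
  assumes "r < l"
  shows "1 \<le> bt l r" "bt l r \<le> l" "bt l r mod l = r"
  using assms unfolding bt_def by auto

lemma vv_len: "length (vv n l \<rho>) = length \<rho>"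
  unfolding vv_def by simp

lemma vv_nth: "p < length \<rho> \<Longrightarrow> vv n l \<rho> ! p = (bt l (\<rho> ! p) - 1) * n + p + 1"
  unfolding vv_def by simp

lemma vv_blk:
  assumes "p < length \<rho>" "length \<rho> \<le> n" "\<rho> ! p < l"
  shows "blk n (vv n l \<rho> ! p) = bt l (\<rho> ! p)"
proof -
  have n: "n > 0" using assms by simp
  have b: "1 \<le> bt l (\<rho> ! p)" using bt_props[OF assms(3)] by simp
  have "(bt l (\<rho> ! p) - 1) * n + p + 1 \<le> bt l (\<rho> ! p) * n"
  proof -
    have "bt l (\<rho> ! p) * n = (bt l (\<rho> ! p) - 1) * n + n" using b by (metis add.commute le_add_diff_inverse mult_Suc plus_1_eq_Suc)
    then show ?thesis using assms(1,2) by simp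
  qed
  then show ?thesis unfolding vv_nth[OF assms(1)] using blk_eq_iff[OF n b] by simp
qed

lemma vv_range:
  assumes "p < length \<rho>" "length \<rho> \<le> n" "\<rho> ! p < l"
  shows "1 \<le> vv n l \<rho> ! p" "vv n l \<rho> ! p \<le> n * l"
proof -
  show "1 \<le> vv n l \<rho> ! p" unfolding vv_nth[OF assms(1)] by simp
  have n: "n > 0" using assms by simp
  have b: "1 \<le> bt l (\<rho> ! p)" "bt l (\<rho> ! p) \<le> l" using bt_props[OF assms(3)] by auto
  have "(bt l (\<rho> ! p) - 1) * n + p + 1 \<le> bt l (\<rho> ! p) * n"
  proof -
    have "bt l (\<rho> ! p) * n = (bt l (\<rho> ! p) - 1) * n + n" using b by (metis add.commute le_add_diff_inverse mult_Suc plus_1_eq_Suc)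
    then show ?thesis using assms(1,2) by simp
  qed
  also have "\<dots> \<le> l * n" using b(2) by simp
  finally show "vv n l \<rho> ! p \<le> n * l" unfolding vv_nth[OF assms(1)] by (simp add: mult.commute)
qed

lemma vv_basis:
  assumes "length \<rho> = m" "m \<le> n" "\<forall>r\<in>set \<rho>. r < l"
  shows "(vv n l \<rho>, replicate m 0) \<in> basisW n l m"
  unfolding basisW_iff
proof (intro conjI ballI)
  show "length (vv n l \<rho>) = m" using assms vv_len by simp
  show "length (replicate m (0::nat)) = m" by simp
  fix i assume "i \<in> set (vv n l \<rho>)"
  then obtain p where p: "p < length \<rho>" "i = vv n l \<rho> ! p" by (auto simp: in_set_conv_nth vv_len)
  have "\<rho> ! p < l" using assms(3) p(1) by auto
  then show "1 \<le> i" "i \<le> n * l" using vv_range[OF p(1) _ ] p assms by auto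
qed

lemma vv_distinct:
  assumes "length \<rho> \<le> n" "\<forall>r\<in>set \<rho>. r < l"
  shows "distinct (vv n l \<rho>)"
proof -
  have "p = q" if pq: "p < length \<rho>" "q < length \<rho>" "vv n l \<rho> ! p = vv n l \<rho> ! q" for p q
  proof -
    have lp: "\<rho> ! p < l" "\<rho> ! q < l" using assms(2) pq by auto
    have "bt l (\<rho> ! p) = bt l (\<rho> ! q)" using vv_blk[OF pq(1) assms(1) lp(1)] vv_blk[OF pq(2) assms(1) lp(2)] pq(3) by simp
    then show "p = q" using pq(3) unfolding vv_nth[OF pq(1)] vv_nth[OF pq(2)] by simp
  qed
  then show ?thesis unfolding distinct_conv_nth vv_len by blast
qed

lemma rho_len: "length (rho n l m b) = m" unfolding rho_def by simp

lemma rho_lt: "l > 0 \<Longrightarrow> \<forall>r\<in>set (rho n l m b). r < l" unfolding rho_def by auto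

lemma rho_vv:
  assumes "length \<rho> = m" "m \<le> n" "\<forall>r\<in>set \<rho>. r < l"
  shows "rho n l m (vv n l \<rho>, replicate m 0) = \<rho>"
proof (rule nth_equalityI)
  show "length (rho n l m (vv n l \<rho>, replicate m 0)) = length \<rho>" using assms rho_len by simp
  fix p assume "p < length (rho n l m (vv n l \<rho>, replicate m 0))"
  then have p: "p < m" using rho_len by simp
  have lp: "\<rho> ! p < l" using assms p by auto
  show "rho n l m (vv n l \<rho>, replicate m 0) ! p = \<rho> ! p"
    unfolding rho_def using p vv_blk[of p \<rho> n l] assms lp bt_props[OF lp] by simp
qed

definition TT :: "((idx \<Rightarrow> complex) \<Rightarrow> (idx \<Rightarrow> complex)) \<Rightarrow> nat \<Rightarrow> nat \<Rightarrow> nat \<Rightarrow> (idx \<Rightarrow> complex) \<Rightarrow> (idx \<Rightarrow> complex)" where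
  "TT S n l m = restrict (\<lambda>w t. \<Sum>b\<in>wsupp w. w b * Kf S n l m b t) (Wm n l m)"

locale ctx =
  fixes S :: "(idx \<Rightarrow> complex) \<Rightarrow> (idx \<Rightarrow> complex)" and n l m :: nat
  assumes S: "S \<in> HomG n l m" and l: "0 < l" and nm: "m \<le> n" and m: "0 < m"
begin

lemma n: "0 < n" using nm m by simp

lemma Sdl_Wm:
  assumes "length \<rho> = m" "\<forall>r\<in>set \<rho>. r < l"
  shows "S (dl (vv n l \<rho>, replicate m 0)) \<in> Wm n l m"
proof -
  have "dl (vv n l \<rho>, replicate m 0) \<in> V0 n l m" using dl_V0 vv_basis[OF assms(1) nm assms(2)] by simp
  then show ?thesis using HomGD(2)[OF S] by blast
qed

lemma K1:
  assumes b: "(ys, ls) \<in> basisW n l m"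
  shows "Kf S n l m (ys, ls) \<in> Wm n l m"
proof -
  have len: "length ys = m" "length ls = m" and rng: "\<forall>i\<in>set ys. 1 \<le> i \<and> i \<le> n * l" using b unfolding basisW_iff by auto
  define \<rho> where "\<rho> = rho n l m (ys, ls)"
  define V where "V = vv n l \<rho>"
  define X where "X = S (dl (V, replicate m 0))"
  have XW: "X \<in> Wm n l m" unfolding X_def V_def \<rho>_def using Sdl_Wm[OF rho_len rho_lt[OF l]] by simp
  define P where "P = {\<sigma>. \<sigma> permutes {..<m}}"
  have fP: "finite P" unfolding P_def by (simp add: finite_permutations)
  define g where "g = (\<lambda>(\<sigma>::nat\<Rightarrow>nat, c::idx). (permute_list \<sigma> ys, map (\<lambda>r. ls ! \<sigma> r + snd c ! r) [0..<m]))"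
  have sub: "{t. Kf S n l m (ys, ls) t \<noteq> 0} \<subseteq> g ` (P \<times> wsupp X)"
  proof
    fix t assume "t \<in> {t. Kf S n l m (ys, ls) t \<noteq> 0}"
    then have "(\<Sum>\<sigma>\<in>P. Hc S m V \<sigma> (ys, ls) t) \<noteq> 0" unfolding Kf_def P_def V_def \<rho>_def by simp
    then obtain \<sigma> where s: "\<sigma> \<in> P" "Hc S m V \<sigma> (ys, ls) t \<noteq> 0" by (rule sum.not_neutral_contains_not_neutral)
    obtain xs ks where t: "t = (xs, ks)" by (cases t)
    define cs where "cs = map (\<lambda>r. ks ! r - ls ! \<sigma> r) [0..<m]"
    have c: "xs = permute_list \<sigma> ys" "length ks = m" "\<forall>r<m. ls ! \<sigma> r \<le> ks ! r" "X (permute_list \<sigma> V, cs) \<noteq> 0"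
      using s(2) unfolding Hc_def t X_def cs_def by (auto split: if_splits)
    have "ks = map (\<lambda>r. ls ! \<sigma> r + cs ! r) [0..<m]"
      by (rule nth_equalityI) (use c(2,3) in \<open>auto simp: cs_def\<close>)
    then have "t = g (\<sigma>, (permute_list \<sigma> V, cs))" unfolding g_def t using c(1) by simp
    moreover have "(\<sigma>, (permute_list \<sigma> V, cs)) \<in> P \<times> wsupp X" using s(1) c(4) unfolding wsupp_def by simp
    ultimately show "t \<in> g ` (P \<times> wsupp X)" by blast
  qed
  have fin: "finite {t. Kf S n l m (ys, ls) t \<noteq> 0}"
    by (rule finite_subset[OF sub]) (use fP decomp(2)[OF XW] in simp)
  show ?thesis
  proof (rule WmI[OF fin])
    fix t assume "Kf S n l m (ys, ls) t \<noteq> 0"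
    then obtain \<sigma> c where sc: "\<sigma> \<in> P" "t = g (\<sigma>, c)" using sub by blast
    have sp: "\<sigma> permutes {..<length ys}" using sc(1) len unfolding P_def by simp
    have tt: "t = (permute_list \<sigma> ys, map (\<lambda>r. ls ! \<sigma> r + snd c ! r) [0..<m])" using sc(2) unfolding g_def by simp
    show "t \<in> basisW n l m" unfolding tt basisW_iff using len rng set_permute_list[OF sp] by simp
  qed
qed

lemma K1': "b \<in> basisW n l m \<Longrightarrow> Kf S n l m b \<in> Wm n l m"
  using K1 by (cases b) simp

lemma K2:
  assumes w: "w \<in> Wm n l m" and F: "finite F" "wsupp w \<subseteq> F"
  shows "TT S n l m w = (\<lambda>t. \<Sum>b\<in>F. w b * Kf S n l m b t)"
proof
  fix t
  have "TT S n l m w t = (\<Sum>b\<in>wsupp w. w b * Kf S n l m b t)" unfolding TT_def using w by simp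
  also have "\<dots> = (\<Sum>b\<in>F. w b * Kf S n l m b t)"
    by (rule sum.mono_neutral_left[OF F(1) F(2)]) (auto simp: wsupp_def)
  finally show "TT S n l m w t = (\<Sum>b\<in>F. w b * Kf S n l m b t)" .
qed

lemma K3: "lin_on (Wm n l m) (TT S n l m)"
  unfolding lin_on_def
proof (intro ballI allI)
  fix x y a c assume xy: "x \<in> Wm n l m" "y \<in> Wm n l m"
  define F where "F = wsupp x \<union> wsupp y"
  have fF: "finite F" unfolding F_def using decomp(2)[OF xy(1)] decomp(2)[OF xy(2)] by simp
  have z: "(\<lambda>t. a * x t + c * y t) \<in> Wm n l m" by (rule Wm_comb[OF xy])
  have sz: "wsupp (\<lambda>t. a * x t + c * y t) \<subseteq> F" unfolding F_def wsupp_def by auto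
  have "TT S n l m (\<lambda>t. a * x t + c * y t) = (\<lambda>t. \<Sum>b\<in>F. (a * x b + c * y b) * Kf S n l m b t)"
    using K2[OF z fF sz] by simp
  also have "\<dots> = (\<lambda>t. a * (\<Sum>b\<in>F. x b * Kf S n l m b t) + c * (\<Sum>b\<in>F. y b * Kf S n l m b t))"
    by (simp add: sum_distrib_left sum.distrib algebra_simps)
  also have "\<dots> = (\<lambda>t. a * TT S n l m x t + c * TT S n l m y t)"
    using K2[OF xy(1) fF] K2[OF xy(2) fF] unfolding F_def by simp
  finally show "TT S n l m (\<lambda>t. a * x t + c * y t) = (\<lambda>t. a * TT S n l m x t + c * TT S n l m y t)" .
qed

lemma K4: "b \<in> basisW n l m \<Longrightarrow> TT S n l m (dl b) = Kf S n l m b"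
proof -
  assume b: "b \<in> basisW n l m"
  have "wsupp (dl b) \<subseteq> {b}" unfolding wsupp_def dl_def by auto
  then have "TT S n l m (dl b) = (\<lambda>t. \<Sum>b'\<in>{b}. dl b b' * Kf S n l m b' t)" by (rule K2[OF dl_Wm[OF b] finite.intros(2)[OF finite.intros(1)]])
  then show ?thesis by (simp add: dl_def)
qed

lemma TT_Wm: "w \<in> Wm n l m \<Longrightarrow> TT S n l m w \<in> Wm n l m"
proof -
  assume w: "w \<in> Wm n l m"
  have "\<forall>b\<in>wsupp w. Kf S n l m b \<in> Wm n l m" using decomp(3)[OF w] K1' by blast
  then have "(\<lambda>t. \<Sum>b\<in>wsupp w. w b * Kf S n l m b t) \<in> Wm n l m" by (rule subsp_sum[OF subsp_Wm decomp(2)[OF w]])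
  then show ?thesis using K2[OF w decomp(2)[OF w] order_refl] by simp
qed

lemma K5:
  assumes pg: "p_gen n l i j k" and b: "(ys, ls) \<in> basisW n l m"
  shows "TT S n l m (act m i j k (dl (ys, ls))) = act m i j k (Kf S n l m (ys, ls))"
proof -
  have len: "length ys = m" "length ls = m" using b unfolding basisW_iff by auto
  have ir: "1 \<le> i" "i \<le> n * l" using p_gen_range[OF pg] by auto
  have bp: "\<forall>p\<in>{..<m}. dl (ys[p := i], ls[p := ls ! p + k]) \<in> Wm n l m" using basisW_upd[OF b ir] dl_Wm by blast
  have "TT S n l m (act m i j k (dl (ys, ls))) = TT S n l m (\<lambda>t. \<Sum>p<m. (if ys ! p = j then 1 else 0) * dl (ys[p := i], ls[p := ls ! p + k]) t)"
    using act_dl'[OF b] by simp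
  also have "\<dots> = (\<lambda>t. \<Sum>p<m. (if ys ! p = j then 1 else 0) * TT S n l m (dl (ys[p := i], ls[p := ls ! p + k])) t)"
    by (rule lin_sum[OF subsp_Wm K3 finite_lessThan bp])
  also have "\<dots> = (\<lambda>t. \<Sum>p<m. (if ys ! p = j then 1 else 0) * Kf S n l m (ys[p := i], ls[p := ls ! p + k]) t)"
    using K4 basisW_upd[OF b ir] by simp
  also have "\<dots> = act m i j k (Kf S n l m (ys, ls))" by (rule K6[OF len pg])
  finally show ?thesis .
qed

lemma K7: "TT S n l m \<in> EndP n l m"
proof -
  have a: "TT S n l m \<in> extensional (Wm n l m)" unfolding TT_def by simp
  have c: "TT S n l m (act m i j k w) = act m i j k (TT S n l m w)" if pg: "p_gen n l i j k" and w: "w \<in> Wm n l m" for i j k w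
  proof -
    have ir: "1 \<le> i" "i \<le> n * l" using p_gen_range[OF pg] by auto
    have ab: "\<forall>b\<in>wsupp w. act m i j k (dl b) \<in> Wm n l m" using decomp(3)[OF w] act_dl_Wm ir by blast
    have e: "\<forall>b\<in>wsupp w. TT S n l m (act m i j k (dl b)) = act m i j k (Kf S n l m b)"
    proof
      fix b assume "b \<in> wsupp w"
      then have "b \<in> basisW n l m" using decomp(3)[OF w] by blast
      then show "TT S n l m (act m i j k (dl b)) = act m i j k (Kf S n l m b)" using K5[OF pg] by (cases b) simp
    qed
    have "TT S n l m (act m i j k w) = TT S n l m (act m i j k (\<lambda>t. \<Sum>b\<in>wsupp w. w b * dl b t))"
      using decomp(1)[OF w] by simp
    also have "\<dots> = TT S n l m (\<lambda>t. \<Sum>b\<in>wsupp w. w b * act m i j k (dl b) t)" by (simp only: act_sum)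
    also have "\<dots> = (\<lambda>t. \<Sum>b\<in>wsupp w. w b * TT S n l m (act m i j k (dl b)) t)"
      by (rule lin_sum[OF subsp_Wm K3 decomp(2)[OF w] ab])
    also have "\<dots> = (\<lambda>t. \<Sum>b\<in>wsupp w. w b * act m i j k (Kf S n l m b) t)" using e by simp
    also have "\<dots> = act m i j k (\<lambda>t. \<Sum>b\<in>wsupp w. w b * Kf S n l m b t)" by (simp only: act_sum)
    also have "\<dots> = act m i j k (TT S n l m w)" using K2[OF w decomp(2)[OF w] order_refl] by simp
    finally show ?thesis .
  qed
  show ?thesis unfolding EndP_def using a TT_Wm K3 c by blast
qed

end

lemma sum_ind: "(\<Sum>p<(m::nat). (if P p then 1 else 0) :: complex) = of_nat (card {p\<in>{..<m}. P p})"
proof -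
  have "(\<Sum>p\<in>{p\<in>{..<m}. P p}. (1::complex)) = (\<Sum>p<m. (if P p then 1 else 0))"
    by (rule sum.inter_filter) simp
  then show ?thesis by simp
qed

lemma act_dl_single:
  assumes b: "(ys, ls) \<in> basisW n l m" and p: "p < m" and u: "\<And>r. r < m \<Longrightarrow> r \<noteq> p \<Longrightarrow> ys ! r \<noteq> ys ! p"
  shows "act m a (ys ! p) k (dl (ys, ls)) = dl (ys[p := a], ls[p := ls ! p + k])"
proof
  fix t
  have "act m a (ys ! p) k (dl (ys, ls)) t = (\<Sum>r<m. (if ys ! r = ys ! p then 1 else 0) * dl (ys[r := a], ls[r := ls ! r + k]) t)"
    using act_dl'[OF b] by simp
  also have "\<dots> = (if ys ! p = ys ! p then 1 else 0) * dl (ys[p := a], ls[p := ls ! p + k]) t"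
    by (rule sum_single[OF p]) (use u in auto)
  finally show "act m a (ys ! p) k (dl (ys, ls)) t = dl (ys[p := a], ls[p := ls ! p + k]) t" by simp
qed

lemma sum_two:
  assumes "p < (m::nat)" "q < m" "p \<noteq> q" "\<And>r. r < m \<Longrightarrow> r \<noteq> p \<Longrightarrow> r \<noteq> q \<Longrightarrow> f r = 0"
  shows "(\<Sum>r<m. f r) = f p + f q"
proof -
  have "(\<Sum>r<m. f r) = (\<Sum>r\<in>{p, q}. f r)"
    by (rule sum.mono_neutral_right) (use assms in auto)
  then show ?thesis using assms(3) by simp
qed

context ctx
begin

lemma WT:
  assumes V: "(V, replicate m 0) \<in> basisW n l m" and nz: "S (dl (V, replicate m 0)) (xs, ks) \<noteq> 0"
  shows "mset xs = mset V" "length ks = m"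
proof -
  define z where "z = replicate m (0::nat)"
  define X where "X = S (dl (V, z))"
  have dV: "dl (V, z) \<in> V0 n l m" using dl_V0[OF V[folded z_def]] unfolding z_def by simp
  have XW: "X \<in> Wm n l m" unfolding X_def using HomGD(2)[OF S dV] .
  have nz': "X (xs, ks) \<noteq> 0" using nz unfolding X_def z_def .
  have xb: "(xs, ks) \<in> basisW n l m" using WmD[OF XW nz'] .
  then show "length ks = m" unfolding basisW_iff by simp
  have lx: "length xs = m" and rx: "\<forall>i\<in>set xs. 1 \<le> i \<and> i \<le> n * l" using xb unfolding basisW_iff by auto
  have lV: "length V = m" and rV: "\<forall>i\<in>set V. 1 \<le> i \<and> i \<le> n * l" using V unfolding basisW_iff by auto
  have cnt: "card {p\<in>{..<m}. V ! p = i} = card {q\<in>{..<m}. xs ! q = i}" if i: "1 \<le> i" "i \<le> n * l" for i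
  proof -
    have gg: "gl_gen n l i i" unfolding gl_gen_def using i by simp
    have "act m i i 0 (dl (V, z)) = (\<lambda>t. \<Sum>p<m. (if V ! p = i then 1 else 0) * dl (V[p := i], z[p := z ! p + 0]) t)"
      using act_dl'[OF V[folded z_def]] by simp
    also have "\<dots> = (\<lambda>t. \<Sum>p<m. (if V ! p = i then 1 else 0) * dl (V, z) t)"
      by (rule ext, rule sum.cong[OF refl]) auto
    also have "\<dots> = (\<lambda>t. of_nat (card {p\<in>{..<m}. V ! p = i}) * dl (V, z) t)"
      by (simp add: sum_distrib_right[symmetric] sum_ind)
    finally have a1: "act m i i 0 (dl (V, z)) = (\<lambda>t. of_nat (card {p\<in>{..<m}. V ! p = i}) * dl (V, z) t)" .
    have "S (act m i i 0 (dl (V, z))) = (\<lambda>t. of_nat (card {p\<in>{..<m}. V ! p = i}) * X t)"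
      unfolding a1 X_def by (rule lin_scale[OF HomGD(3)[OF S] dV])
    moreover have "S (act m i i 0 (dl (V, z))) = act m i i 0 X" unfolding X_def by (rule HomGD(4)[OF S gg dV])
    ultimately have e: "act m i i 0 X (xs, ks) = of_nat (card {p\<in>{..<m}. V ! p = i}) * X (xs, ks)" by metis
    have "act m i i 0 X (xs, ks) = (\<Sum>q<m. if xs ! q = i then X (xs, ks) else 0)"
      unfolding act_def by (simp, rule sum.cong[OF refl], auto)
    also have "\<dots> = (\<Sum>q<m. (if xs ! q = i then 1 else 0) * X (xs, ks))" by (rule sum.cong) auto
    also have "\<dots> = of_nat (card {q\<in>{..<m}. xs ! q = i}) * X (xs, ks)"
      by (simp add: sum_distrib_right[symmetric] sum_ind)
    finally have "of_nat (card {p\<in>{..<m}. V ! p = i}) * X (xs, ks) = of_nat (card {q\<in>{..<m}. xs ! q = i}) * X (xs, ks)"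
      using e by simp
    then have "(of_nat (card {p\<in>{..<m}. V ! p = i}) :: complex) = of_nat (card {q\<in>{..<m}. xs ! q = i})"
      using nz' by simp
    then show ?thesis by (simp only: of_nat_eq_iff)
  qed
  have cm: "\<And>ys :: nat list. count (mset ys) i = card {p\<in>{..<length ys}. ys ! p = i}" for i
  proof -
    fix ys :: "nat list"
    have "count (mset ys) i = card {p. p < length ys \<and> i = ys ! p}"
      by (simp add: count_mset count_list_eq_length_filter length_filter_conv_card)
    also have "{p. p < length ys \<and> i = ys ! p} = {p\<in>{..<length ys}. ys ! p = i}" by auto
    finally show "count (mset ys) i = card {p\<in>{..<length ys}. ys ! p = i}" .
  qed
  show "mset xs = mset V"
  proof (rule multiset_eqI)
    fix i
    show "count (mset xs) i = count (mset V) i"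
    proof (cases "1 \<le> i \<and> i \<le> n * l")
      case True then show ?thesis using cnt[of i] cm[of xs i] cm[of V i] lx lV by simp
    next
      case False
      then have "i \<notin> set xs" "i \<notin> set V" using rx rV by auto
      then have c0: "count (mset xs) i = 0" "count (mset V) i = 0" by simp_all
      show ?thesis by (rule trans[OF c0(1) c0(2)[symmetric]])
    qed
  qed
qed

lemma UNIQ:
  assumes d: "distinct V" "length V = m" and s: "\<sigma>1 permutes {..<m}" "\<sigma>2 permutes {..<m}"
    and e: "permute_list \<sigma>1 V = permute_list \<sigma>2 V"
  shows "\<sigma>1 = \<sigma>2"
proof
  fix r
  show "\<sigma>1 r = \<sigma>2 r"
  proof (cases "r < m")
    case True
    have "permute_list \<sigma>1 V ! r = permute_list \<sigma>2 V ! r" using e by simp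
    then have "V ! \<sigma>1 r = V ! \<sigma>2 r" using True s d(2) by (simp add: permute_list_nth)
    moreover have "\<sigma>1 r < m" "\<sigma>2 r < m" using True permutes_in_image[OF s(1)] permutes_in_image[OF s(2)] by auto
    ultimately show ?thesis using nth_eq_iff_index_eq[OF d(1)] d(2) by simp
  next
    case False
    then show ?thesis using permutes_not_in[OF s(1)] permutes_not_in[OF s(2)] by simp
  qed
qed

lemma CL_act:
  assumes v: "v \<in> V0 n l m" and e: "TT S n l m v = S v" and g: "gl_gen n l a b"
  shows "TT S n l m (act m a b 0 v) = S (act m a b 0 v)"
proof -
  have "TT S n l m (act m a b 0 v) = act m a b 0 (TT S n l m v)" by (rule EndPD(4)[OF K7 gl_p_gen[OF g] V0_Wm[OF v]])
  also have "\<dots> = act m a b 0 (S v)" using e by simp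
  also have "\<dots> = S (act m a b 0 v)" by (rule HomGD(4)[OF S g v, symmetric])
  finally show ?thesis .
qed

lemma CL_diff:
  assumes x: "x \<in> V0 n l m" and y: "y \<in> V0 n l m" and ex: "TT S n l m x = S x" and ey: "TT S n l m y = S y"
  shows "TT S n l m (\<lambda>t. x t - y t) = S (\<lambda>t. x t - y t)"
proof -
  have eq: "(\<lambda>t. x t - y t) = (\<lambda>t. 1 * x t + (-1) * y t)" by simp
  have "TT S n l m (\<lambda>t. 1 * x t + (-1) * y t) = (\<lambda>t. 1 * TT S n l m x t + (-1) * TT S n l m y t)"
    by (rule lin_onD[OF K3 V0_Wm[OF x] V0_Wm[OF y]])
  also have "\<dots> = (\<lambda>t. 1 * S x t + (-1) * S y t)" using ex ey by simp
  also have "\<dots> = S (\<lambda>t. 1 * x t + (-1) * y t)" by (rule lin_onD[OF HomGD(3)[OF S] x y, symmetric])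
  finally show ?thesis unfolding eq .
qed

end

context ctx
begin

lemma BASE:
  assumes \<rho>: "length \<rho> = m" "\<forall>r\<in>set \<rho>. r < l"
  shows "TT S n l m (dl (vv n l \<rho>, replicate m 0)) = S (dl (vv n l \<rho>, replicate m 0))"
proof
  fix t :: idx
  obtain xs ks where t: "t = (xs, ks)" by (cases t)
  define V where "V = vv n l \<rho>"
  define z where "z = replicate m (0::nat)"
  define X where "X = S (dl (V, z))"
  define P where "P = {\<sigma>. \<sigma> permutes {..<m}}"
  have fP: "finite P" unfolding P_def by (simp add: finite_permutations)
  have Vb: "(V, z) \<in> basisW n l m" unfolding V_def z_def by (rule vv_basis[OF \<rho>(1) nm \<rho>(2)])
  have lV: "length V = m" unfolding V_def using vv_len \<rho>(1) by simp
  have dV: "distinct V" unfolding V_def using vv_distinct \<rho> nm by simp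
  have rV: "rho n l m (V, z) = \<rho>" unfolding V_def z_def by (rule rho_vv[OF \<rho>(1) nm \<rho>(2)])
  have "TT S n l m (dl (V, z)) t = Kf S n l m (V, z) t" using K4[OF Vb] by simp
  also have "\<dots> = (\<Sum>\<sigma>\<in>P. if xs = permute_list \<sigma> V \<and> length ks = m then X (xs, ks) else 0)"
    unfolding Kf_def rV P_def
  proof (rule sum.cong[OF refl])
    fix \<sigma> assume "\<sigma> \<in> {\<sigma>. \<sigma> permutes {..<m}}"
    then have s: "\<sigma> permutes {..<m}" by simp
    have sr: "\<And>r. r < m \<Longrightarrow> \<sigma> r < m" using permutes_in_image[OF s] by simp
    have zz: "\<forall>r<m. z ! \<sigma> r \<le> ks ! r" using sr unfolding z_def by simp
    have mm: "length ks = m \<Longrightarrow> map (\<lambda>r. ks ! r - z ! \<sigma> r) [0..<m] = ks"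
      by (rule nth_equalityI) (use sr in \<open>auto simp: z_def\<close>)
    have h1: "Hc S m V \<sigma> (V, z) (xs, ks) = (if xs = permute_list \<sigma> V \<and> length ks = m \<and> (\<forall>r<m. z ! \<sigma> r \<le> ks ! r)
       then S (dl (V, replicate m 0)) (permute_list \<sigma> V, map (\<lambda>r. ks ! r - z ! \<sigma> r) [0..<m]) else 0)"
      by (simp only: Hc_def fst_conv snd_conv)
    have "Hc S m V \<sigma> (V, z) (xs, ks) = (if xs = permute_list \<sigma> V \<and> length ks = m then X (xs, ks) else 0)"
    proof (cases "xs = permute_list \<sigma> V \<and> length ks = m")
      case True
      then have e1: "map (\<lambda>r. ks ! r - z ! \<sigma> r) [0..<m] = ks" using mm by blast
      have e2: "permute_list \<sigma> V = xs" using True by simp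
      show ?thesis unfolding h1 by (simp only: e1 e2 X_def z_def[symmetric] zz[THEN eqTrueI] conjunct2[OF True] simp_thms if_True)
    next
      case False
      then show ?thesis unfolding h1 by auto
    qed
    then show "Hc S m (vv n l \<rho>) \<sigma> (V, z) t = (if xs = permute_list \<sigma> V \<and> length ks = m then X (xs, ks) else 0)"
      unfolding t V_def .
  qed
  also have "\<dots> = X (xs, ks)"
  proof (cases "X (xs, ks) = 0")
    case True
    have "\<forall>\<sigma>\<in>P. (if xs = permute_list \<sigma> V \<and> length ks = m then X (xs, ks) else 0) = 0" by (intro ballI) (simp only: True if_cancel)
    then show ?thesis using True by (simp only: sum.neutral)
  next
    case False
    have w: "mset xs = mset V" "length ks = m" using WT[OF Vb[unfolded z_def] False[unfolded X_def z_def]] by auto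
    obtain \<sigma>0 where s0: "\<sigma>0 permutes {..<length V}" "permute_list \<sigma>0 V = xs" using mset_eq_permutation[OF w(1)] by blast
    have s0P: "\<sigma>0 \<in> P" using s0(1) lV unfolding P_def by simp
    have "(\<Sum>\<sigma>\<in>P. if xs = permute_list \<sigma> V \<and> length ks = m then X (xs, ks) else 0) = (\<Sum>\<sigma>\<in>P. if \<sigma> = \<sigma>0 then X (xs, ks) else 0)"
    proof (rule sum.cong[OF refl])
      fix \<sigma> assume "\<sigma> \<in> P"
      then have s: "\<sigma> permutes {..<m}" unfolding P_def by simp
      have s0': "\<sigma>0 permutes {..<m}" using s0(1) lV by simp
      have "xs = permute_list \<sigma> V \<longleftrightarrow> \<sigma> = \<sigma>0"
      proof
        assume "xs = permute_list \<sigma> V"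
        then have "permute_list \<sigma> V = permute_list \<sigma>0 V" using s0(2) by simp
        then show "\<sigma> = \<sigma>0" by (rule UNIQ[OF dV lV s s0'])
      next
        assume "\<sigma> = \<sigma>0"
        then show "xs = permute_list \<sigma> V" using s0(2) by simp
      qed
      then show "(if xs = permute_list \<sigma> V \<and> length ks = m then X (xs, ks) else 0) = (if \<sigma> = \<sigma>0 then X (xs, ks) else 0)"
        using w(2) by simp
    qed
    also have "\<dots> = X (xs, ks)" using s0P fP by simp
    finally show ?thesis .
  qed
  finally show "TT S n l m (dl (vv n l \<rho>, replicate m 0)) t = S (dl (vv n l \<rho>, replicate m 0)) t"
    unfolding t X_def V_def z_def .
qed


end

lemma bt_blk:
  assumes "1 \<le> x" "x \<le> l"
  shows "bt l (x mod l) = x"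
proof (cases "x = l")
  case True then show ?thesis unfolding bt_def by simp
next
  case False
  then have "x < l" using assms by simp
  then show ?thesis unfolding bt_def using assms by simp
qed

lemma distinct_uniq: "distinct u \<Longrightarrow> r < length u \<Longrightarrow> p < length u \<Longrightarrow> r \<noteq> p \<Longrightarrow> u ! r \<noteq> u ! p"
  by (simp add: nth_eq_iff_index_eq)

lemma rep_upd: "p < m \<Longrightarrow> (replicate m (0::nat))[p := 0] = replicate m 0"
  by (metis list_update_id nth_replicate)

lemma basisW_upd0:
  assumes "(ys, ls) \<in> basisW n l m" "1 \<le> i" "i \<le> n * l"
  shows "(ys[p := i], ls) \<in> basisW n l m"
  using basisW_upd[OF assms, of p "ls ! p"] by simp

context ctx
begin

abbreviation Gd where "Gd ys \<equiv> TT S n l m (dl (ys, replicate m 0)) = S (dl (ys, replicate m 0))"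

lemma zb: "(ys, replicate m 0) \<in> basisW n l m \<longleftrightarrow> length ys = m \<and> (\<forall>i\<in>set ys. 1 \<le> i \<and> i \<le> n * l)"
  unfolding basisW_iff by simp

lemma dlz_V0: "(ys, replicate m 0) \<in> basisW n l m \<Longrightarrow> dl (ys, replicate m 0) \<in> V0 n l m"
  using dl_V0 by simp

lemma act_single_z:
  assumes b: "(ys, replicate m 0) \<in> basisW n l m" and p: "p < m" and u: "\<And>r. r < m \<Longrightarrow> r \<noteq> p \<Longrightarrow> ys ! r \<noteq> ys ! p"
  shows "act m a (ys ! p) 0 (dl (ys, replicate m 0)) = dl (ys[p := a], replicate m 0)"
  using act_dl_single[OF b p u, of a 0] p rep_upd[OF p] by simp

lemma gl_genI: "1 \<le> a \<Longrightarrow> a \<le> n * l \<Longrightarrow> 1 \<le> b \<Longrightarrow> b \<le> n * l \<Longrightarrow> blk n a = blk n b \<Longrightarrow> gl_gen n l a b"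
  unfolding gl_gen_def by simp

lemma C1:
  assumes ys: "(ys, replicate m 0) \<in> basisW n l m" "distinct ys"
  shows "(u, replicate m 0) \<in> basisW n l m \<Longrightarrow> distinct u \<Longrightarrow> (\<forall>p<m. blk n (u ! p) = blk n (ys ! p)) \<Longrightarrow> Gd u \<Longrightarrow> Gd ys"
proof (induction "card {p\<in>{..<m}. u ! p \<noteq> ys ! p}" arbitrary: u rule: less_induct)
  case less
  have lu: "length u = m" and ru: "\<forall>i\<in>set u. 1 \<le> i \<and> i \<le> n * l" using less.prems(1) unfolding zb by auto
  have ly: "length ys = m" and ry: "\<forall>i\<in>set ys. 1 \<le> i \<and> i \<le> n * l" using ys(1) unfolding zb by auto
  show ?case
  proof (cases "\<exists>p<m. u ! p \<noteq> ys ! p")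
    case False
    then have "u = ys" using lu ly by (metis nth_equalityI)
    then show ?thesis using less.prems(4) by simp
  next
    case True
    then obtain p where p: "p < m" "u ! p \<noteq> ys ! p" by blast
    define a where "a = u ! p"
    define b where "b = ys ! p"
    have ar: "1 \<le> a" "a \<le> n * l" using ru p lu unfolding a_def by auto
    have br: "1 \<le> b" "b \<le> n * l" using ry p ly unfolding b_def by auto
    have bab: "blk n a = blk n b" using less.prems(3) p unfolding a_def b_def by simp
    have gba: "gl_gen n l b a" by (rule gl_genI) (use ar br bab in auto)
    have gab: "gl_gen n l a b" by (rule gl_genI) (use ar br bab in auto)
    have uu: "\<And>r. r < m \<Longrightarrow> r \<noteq> p \<Longrightarrow> u ! r \<noteq> u ! p"
    proof -
      fix r assume "r < m" "r \<noteq> p"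
      then show "u ! r \<noteq> u ! p" using distinct_uniq[OF less.prems(2), of r p] lu p(1) by simp
    qed
    define M where "M = (\<lambda>v. {r\<in>{..<m}. v ! r \<noteq> ys ! r})"
    have pM: "p \<in> M u" unfolding M_def using p by simp
    show ?thesis
    proof (cases "b \<in> set u")
      case False
      define u' where "u' = u[p := b]"
      have e: "dl (u', replicate m 0) = act m b a 0 (dl (u, replicate m 0))"
        unfolding u'_def a_def using act_single_z[OF less.prems(1) p(1) uu, of b] by simp
      have g': "Gd u'" unfolding e by (rule CL_act[OF dlz_V0[OF less.prems(1)] less.prems(4) gba])
      have b': "(u', replicate m 0) \<in> basisW n l m" unfolding u'_def by (rule basisW_upd0[OF less.prems(1) br])
      have d': "distinct u'" unfolding u'_def by (rule distinct_list_update[OF less.prems(2)]) (use False in simp)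
      have k': "\<forall>r<m. blk n (u' ! r) = blk n (ys ! r)"
      proof (intro allI impI)
        fix r assume r: "r < m"
        show "blk n (u' ! r) = blk n (ys ! r)" unfolding u'_def b_def
          by (cases "r = p") (use less.prems(3) lu r in auto)
      qed
      have sub: "M u' \<subset> M u"
      proof
        show "M u' \<subseteq> M u"
        proof
          fix r assume "r \<in> M u'"
          then have r: "r < m" "u[p := b] ! r \<noteq> ys ! r" unfolding M_def u'_def by auto
          show "r \<in> M u" unfolding M_def by (cases "r = p") (use r lu b_def in auto)
        qed
        have "p \<notin> M u'" unfolding M_def u'_def using lu p(1) b_def by simp
        then show "M u' \<noteq> M u" using pM by blast
      qed
      have "card (M u') < card (M u)" by (rule psubset_card_mono) (use sub in \<open>auto simp: M_def\<close>)
      then show ?thesis using less.hyps[OF _ b' d' k' g'] unfolding M_def by blast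
    next
      case True
      then obtain q where q: "q < m" "u ! q = b" using lu by (auto simp: in_set_conv_nth)
      have qp: "q \<noteq> p" using q p unfolding b_def by auto
      have uq: "\<And>r. r < m \<Longrightarrow> r \<noteq> q \<Longrightarrow> u ! r \<noteq> u ! q"
      proof -
        fix r assume "r < m" "r \<noteq> q"
        then show "u ! r \<noteq> u ! q" using distinct_uniq[OF less.prems(2), of r q] lu q(1) by simp
      qed
      define u1 where "u1 = u[q := a]"
      have e1: "dl (u1, replicate m 0) = act m a b 0 (dl (u, replicate m 0))"
        unfolding u1_def using act_single_z[OF less.prems(1) q(1) uq, of a] q(2) by simp
      have b1: "(u1, replicate m 0) \<in> basisW n l m" unfolding u1_def by (rule basisW_upd0[OF less.prems(1) ar])
      have g1: "Gd u1" unfolding e1 by (rule CL_act[OF dlz_V0[OF less.prems(1)] less.prems(4) gab])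
      have u1n: "\<And>r. r < m \<Longrightarrow> u1 ! r = (if r = q then a else u ! r)" unfolding u1_def using lu by (simp add: nth_list_update)
      define u' where "u' = u1[p := b]"
      have u'n: "\<And>r. r < m \<Longrightarrow> u' ! r = (if r = p then b else if r = q then a else u ! r)"
        unfolding u'_def using u1n lu qp by (simp add: nth_list_update u1_def)
      have u1q: "u1[q := b] = u" unfolding u1_def using q(2) list_update_id[of u q] by simp
      have "act m b a 0 (dl (u1, replicate m 0)) = (\<lambda>t. dl (u', replicate m 0) t + dl (u, replicate m 0) t)"
      proof
        fix t
        have "act m b a 0 (dl (u1, replicate m 0)) t = (\<Sum>r<m. (if u1 ! r = a then 1 else 0) * dl (u1[r := b], (replicate m 0)[r := replicate m 0 ! r + 0]) t)"
          using act_dl'[OF b1] by (simp add: rep_upd)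
        also have "\<dots> = (if u1 ! p = a then 1 else 0) * dl (u1[p := b], (replicate m 0)[p := replicate m 0 ! p + 0]) t
                      + (if u1 ! q = a then 1 else 0) * dl (u1[q := b], (replicate m 0)[q := replicate m 0 ! q + 0]) t"
        proof (rule sum_two[OF p(1) q(1) qp[symmetric]])
          fix r assume r: "r < m" "r \<noteq> p" "r \<noteq> q"
          then have "u1 ! r \<noteq> a" using u1n uu unfolding a_def by simp
          then show "(if u1 ! r = a then 1 else 0) * dl (u1[r := b], (replicate m 0)[r := replicate m 0 ! r + 0]) t = 0" by simp
        qed
        also have "\<dots> = dl (u', replicate m 0) t + dl (u, replicate m 0) t"
          using u1n[OF p(1)] u1n[OF q(1)] qp p q u1q rep_upd[OF p(1)] rep_upd[OF q(1)] unfolding u'_def a_def by simp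
        finally show "act m b a 0 (dl (u1, replicate m 0)) t = dl (u', replicate m 0) t + dl (u, replicate m 0) t" .
      qed
      then have e': "dl (u', replicate m 0) = (\<lambda>t. act m b a 0 (dl (u1, replicate m 0)) t - dl (u, replicate m 0) t)"
        by simp
      have x0: "act m b a 0 (dl (u1, replicate m 0)) \<in> V0 n l m" by (rule act_V0[OF dlz_V0[OF b1] br])
      have gx: "TT S n l m (act m b a 0 (dl (u1, replicate m 0))) = S (act m b a 0 (dl (u1, replicate m 0)))"
        by (rule CL_act[OF dlz_V0[OF b1] g1 gba])
      have g': "Gd u'" unfolding e' by (rule CL_diff[OF x0 dlz_V0[OF less.prems(1)] gx less.prems(4)])
      have b': "(u', replicate m 0) \<in> basisW n l m" unfolding u'_def by (rule basisW_upd0[OF b1 br])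
      have lu': "length u' = m" using b' unfolding zb by simp
      have mu: "\<And>r. r < m \<Longrightarrow> u ! r \<in> set u" using lu by simp
      have mu': "\<And>r. r < m \<Longrightarrow> u' ! r \<in> set u'" using lu' by simp
      have su: "set u' = set u"
      proof
        show "set u' \<subseteq> set u"
        proof
          fix x assume "x \<in> set u'"
          then obtain r where r: "r < m" "x = u' ! r" using lu' by (auto simp: in_set_conv_nth)
          show "x \<in> set u"
          proof (cases "r = p")
            case True then show ?thesis using r u'n[OF r(1)] q mu[OF q(1)] by simp
          next
            case False
            show ?thesis
            proof (cases "r = q")
              case True then show ?thesis using r u'n[OF r(1)] \<open>r \<noteq> p\<close> mu[OF p(1)] unfolding a_def by simp
            next
              case False then show ?thesis using r u'n[OF r(1)] \<open>r \<noteq> p\<close> mu[OF r(1)] by simp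
            qed
          qed
        qed
        show "set u \<subseteq> set u'"
        proof
          fix x assume "x \<in> set u"
          then obtain r where r: "r < m" "x = u ! r" using lu by (auto simp: in_set_conv_nth)
          show "x \<in> set u'"
          proof (cases "r = p")
            case True
            then have "x = u' ! q" using r u'n[OF q(1)] qp unfolding a_def by simp
            then show ?thesis using mu'[OF q(1)] by simp
          next
            case False
            show ?thesis
            proof (cases "r = q")
              case True
              then have "x = u' ! p" using r u'n[OF p(1)] q(2) by simp
              then show ?thesis using mu'[OF p(1)] by simp
            next
              case False
              then have "x = u' ! r" using r u'n[OF r(1)] \<open>r \<noteq> p\<close> by simp
              then show ?thesis using mu'[OF r(1)] by simp
            qed
          qed
        qed
      qed
      have d': "distinct u'" by (rule card_distinct) (use su lu lu' distinct_card[OF less.prems(2)] in simp)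
      have k': "\<forall>r<m. blk n (u' ! r) = blk n (ys ! r)"
      proof (intro allI impI)
        fix r assume r: "r < m"
        have kq: "blk n (ys ! q) = blk n (u ! q)" using less.prems(3) q(1) by simp
        show "blk n (u' ! r) = blk n (ys ! r)"
        proof (cases "r = p")
          case True then show ?thesis using u'n[OF r] unfolding b_def by simp
        next
          case False
          show ?thesis
          proof (cases "r = q")
            case True then show ?thesis using u'n[OF r] \<open>r \<noteq> p\<close> bab kq q(2) unfolding b_def by simp
          next
            case False then show ?thesis using u'n[OF r] \<open>r \<noteq> p\<close> less.prems(3) r by simp
          qed
        qed
      qed
      have yq: "ys ! q \<noteq> ys ! p" using distinct_uniq[OF ys(2)] ly q(1) p(1) qp by simp
      have sub: "M u' \<subset> M u"
      proof
        show "M u' \<subseteq> M u"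
        proof
          fix r assume "r \<in> M u'"
          then have r: "r < m" "u' ! r \<noteq> ys ! r" unfolding M_def by auto
          show "r \<in> M u"
          proof (cases "r = p")
            case True then show ?thesis using r u'n[OF r(1)] unfolding b_def by simp
          next
            case False
            show ?thesis
            proof (cases "r = q")
              case True then show ?thesis using r q(2) yq unfolding M_def b_def by simp
            next
              case False then show ?thesis using r u'n[OF r(1)] \<open>r \<noteq> p\<close> unfolding M_def by simp
            qed
          qed
        qed
        have "p \<notin> M u'" unfolding M_def using u'n[OF p(1)] b_def by simp
        then show "M u' \<noteq> M u" using pM by blast
      qed
      have "card (M u') < card (M u)" by (rule psubset_card_mono) (use sub in \<open>auto simp: M_def\<close>)
      then show ?thesis using less.hyps[OF _ b' d' k' g'] unfolding M_def by blast
    qed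
  qed
qed

lemma C2: "(ys, replicate m 0) \<in> basisW n l m \<Longrightarrow> Gd ys"
proof (induction "m - card (set ys)" arbitrary: ys rule: less_induct)
  case less
  have ly: "length ys = m" and ry: "\<forall>i\<in>set ys. 1 \<le> i \<and> i \<le> n * l" using less.prems unfolding zb by auto
  show ?case
  proof (cases "distinct ys")
    case True
    define \<rho> where "\<rho> = rho n l m (ys, replicate m 0)"
    have \<rho>l: "length \<rho> = m" unfolding \<rho>_def by (rule rho_len)
    have \<rho>t: "\<forall>r\<in>set \<rho>. r < l" unfolding \<rho>_def by (rule rho_lt[OF l])
    have gu: "Gd (vv n l \<rho>)" by (rule BASE[OF \<rho>l \<rho>t])
    have bu: "(vv n l \<rho>, replicate m 0) \<in> basisW n l m" by (rule vv_basis[OF \<rho>l nm \<rho>t])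
    have du: "distinct (vv n l \<rho>)" by (rule vv_distinct) (use \<rho>l nm \<rho>t in auto)
    have ku: "\<forall>p<m. blk n (vv n l \<rho> ! p) = blk n (ys ! p)"
    proof (intro allI impI)
      fix p assume p: "p < m"
      have rp: "\<rho> ! p = blk n (ys ! p) mod l" unfolding \<rho>_def rho_def using p by simp
      have lp: "\<rho> ! p < l" using \<rho>t \<rho>l p by auto
      have yr: "1 \<le> ys ! p" "ys ! p \<le> n * l" using ry ly p by auto
      have br: "1 \<le> blk n (ys ! p)" "blk n (ys ! p) \<le> l" using blk_range[OF n yr] by auto
      have "blk n (vv n l \<rho> ! p) = bt l (\<rho> ! p)" by (rule vv_blk) (use p \<rho>l nm lp in auto)
      also have "\<dots> = blk n (ys ! p)" unfolding rp by (rule bt_blk[OF br])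
      finally show "blk n (vv n l \<rho> ! p) = blk n (ys ! p)" .
    qed
    show ?thesis by (rule C1[OF less.prems True bu du ku gu])
  next
    case False
    have "\<not> (\<forall>i<length ys. \<forall>j<length ys. i \<noteq> j \<longrightarrow> ys ! i \<noteq> ys ! j)" using False distinct_conv_nth by blast
    then obtain p q where pq: "p < m" "q < m" "p \<noteq> q" "ys ! p = ys ! q" using ly by blast
    have cle: "card (set ys) \<le> m" using card_length[of ys] ly by simp
    have cne: "card (set ys) \<noteq> m" using False card_distinct[of ys] ly by metis
    have clt: "card (set ys) < n" using cle cne nm by simp
    have yp: "1 \<le> ys ! p" "ys ! p \<le> n * l" using ry ly pq(1) by auto
    have bb: "1 \<le> blk n (ys ! p)" "blk n (ys ! p) \<le> l" using blk_range[OF n yp] by auto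
    obtain b where b: "1 \<le> b" "b \<le> n * l" "blk n b = blk n (ys ! p)" "b \<notin> set ys"
      using fresh[OF n bb(1) bb(2) finite_set clt] by blast
    define ys' where "ys' = ys[p := b]"
    have b': "(ys', replicate m 0) \<in> basisW n l m" unfolding ys'_def by (rule basisW_upd0[OF less.prems b(1,2)])
    have lys': "length ys' = m" unfolding ys'_def using ly by simp
    have sy: "set ys' = insert b (set ys)"
    proof
      show "set ys' \<subseteq> insert b (set ys)" unfolding ys'_def by (rule set_update_subset_insert)
      show "insert b (set ys) \<subseteq> set ys'"
      proof
        fix x assume "x \<in> insert b (set ys)"
        then consider "x = b" | "x \<in> set ys" by blast
        then show "x \<in> set ys'"
        proof cases
          case 1
          then have "x = ys' ! p" unfolding ys'_def using pq(1) ly by simp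
          then show ?thesis using nth_mem[of p ys'] pq(1) lys' by simp
        next
          case 2
          then obtain r where r: "r < m" "x = ys ! r" using ly by (auto simp: in_set_conv_nth)
          show ?thesis
          proof (cases "r = p")
            case True
            then have "x = ys' ! q" unfolding ys'_def using r pq ly by simp
            then show ?thesis using nth_mem[of q ys'] pq(2) lys' by simp
          next
            case False
            then have "x = ys' ! r" unfolding ys'_def using r ly by simp
            then show ?thesis using nth_mem[of r ys'] r(1) lys' by simp
          qed
        qed
      qed
    qed
    have "card (set ys') = Suc (card (set ys))" unfolding sy using b(4) by simp
    moreover have "card (set ys') \<le> m" using card_length[of ys'] b' unfolding zb by simp
    ultimately have lt: "m - card (set ys') < m - card (set ys)" by simp
    have g': "Gd ys'" by (rule less.hyps[OF lt b'])
    have uu: "\<And>r. r < m \<Longrightarrow> r \<noteq> p \<Longrightarrow> ys' ! r \<noteq> ys' ! p"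
    proof -
      fix r assume r: "r < m" "r \<noteq> p"
      have "ys' ! r = ys ! r" unfolding ys'_def using r by simp
      moreover have "ys ! r \<in> set ys" using r(1) ly by simp
      moreover have "ys' ! p = b" unfolding ys'_def using pq(1) ly by simp
      ultimately show "ys' ! r \<noteq> ys' ! p" using b(4) by auto
    qed
    have e: "act m (ys ! p) b 0 (dl (ys', replicate m 0)) = dl (ys, replicate m 0)"
    proof -
      have "ys' ! p = b" unfolding ys'_def using pq(1) ly by simp
      then have "act m (ys ! p) b 0 (dl (ys', replicate m 0)) = dl (ys'[p := ys ! p], replicate m 0)"
        using act_single_z[OF b' pq(1) uu, of "ys ! p"] by simp
      also have "ys'[p := ys ! p] = ys" unfolding ys'_def by simp
      finally show ?thesis .
    qed
    have gg: "gl_gen n l (ys ! p) b" by (rule gl_genI) (use yp b in auto)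
    show ?thesis using CL_act[OF dlz_V0[OF b'] g' gg] unfolding e .
  qed
qed

lemma K8: "v \<in> V0 n l m \<Longrightarrow> TT S n l m v = S v"
proof -
  assume v: "v \<in> V0 n l m"
  have w: "v \<in> Wm n l m" using V0_Wm[OF v] .
  have bz: "\<forall>b\<in>wsupp v. \<exists>ys. b = (ys, replicate m 0) \<and> (ys, replicate m 0) \<in> basisW n l m"
  proof
    fix b assume "b \<in> wsupp v"
    then have bv: "v b \<noteq> 0" unfolding wsupp_def by simp
    obtain ys ls where b0: "b = (ys, ls)" by (cases b)
    have b: "b = (ys, ls)" "v (ys, ls) \<noteq> 0" using b0 bv by simp_all
    note h = V0_supp[OF v b(2)]
    have ll: "length ls = m" using h(1) unfolding basisW_iff by simp
    have "replicate (length ls) 0 = ls" by (rule replicate_length_same) (use h(2) in auto)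
    then have "ls = replicate m 0" using ll by simp
    then show "\<exists>ys. b = (ys, replicate m 0) \<and> (ys, replicate m 0) \<in> basisW n l m" using b h(1) by blast
  qed
  have d0: "\<forall>b\<in>wsupp v. dl b \<in> V0 n l m"
  proof
    fix b assume "b \<in> wsupp v"
    then obtain ys where "b = (ys, replicate m 0)" "(ys, replicate m 0) \<in> basisW n l m" using bz by blast
    then show "dl b \<in> V0 n l m" using dlz_V0 by simp
  qed
  have dW: "\<forall>b\<in>wsupp v. dl b \<in> Wm n l m" using d0 V0_Wm by blast
  have eq: "\<forall>b\<in>wsupp v. TT S n l m (dl b) = S (dl b)"
  proof
    fix b assume "b \<in> wsupp v"
    then obtain ys where "b = (ys, replicate m 0)" "(ys, replicate m 0) \<in> basisW n l m" using bz by blast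
    then show "TT S n l m (dl b) = S (dl b)" using C2 by simp
  qed
  have "TT S n l m v = TT S n l m (\<lambda>t. \<Sum>b\<in>wsupp v. v b * dl b t)" using decomp(1)[OF w] by simp
  also have "\<dots> = (\<lambda>t. \<Sum>b\<in>wsupp v. v b * TT S n l m (dl b) t)"
    by (rule lin_sum[OF subsp_Wm K3 decomp(2)[OF w] dW])
  also have "\<dots> = (\<lambda>t. \<Sum>b\<in>wsupp v. v b * S (dl b) t)" using eq by simp
  also have "\<dots> = S (\<lambda>t. \<Sum>b\<in>wsupp v. v b * dl b t)"
    by (rule lin_sum[OF subsp_V0 HomGD(3)[OF S] decomp(2)[OF w] d0, symmetric])
  also have "\<dots> = S v" using decomp(1)[OF w] by simp
  finally show ?thesis .
qed

lemma surj_TT: "restrict (TT S n l m) (V0 n l m) = S"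
proof (rule extensionalityI[OF restrict_extensional HomGD(1)[OF S]])
  fix v assume "v \<in> V0 n l m"
  then show "restrict (TT S n l m) (V0 n l m) v = S v" using K8 by simp
qed

end

theorem lemma2p4:
  fixes n l m :: nat
  assumes "l > 1" and "n \<ge> m" and "m \<ge> 1"
  shows "bij_betw (\<lambda>T. restrict T (V0 n l m)) (EndP n l m) (HomG n l m)"
proof -
  have n0: "n > 0" "m \<le> n" and l0: "l > 0" using assms by auto
  have inj: "inj_on (\<lambda>T. restrict T (V0 n l m)) (EndP n l m)"
  proof (rule inj_onI)
    fix T1 T2 assume "T1 \<in> EndP n l m" "T2 \<in> EndP n l m" "restrict T1 (V0 n l m) = restrict T2 (V0 n l m)"
    then show "T1 = T2" by (rule EndP_inj[OF n0 l0])
  qed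
  have sub: "(\<lambda>T. restrict T (V0 n l m)) ` EndP n l m \<subseteq> HomG n l m" using restr_HomG by blast
  have sup: "HomG n l m \<subseteq> (\<lambda>T. restrict T (V0 n l m)) ` EndP n l m"
  proof
    fix S assume S: "S \<in> HomG n l m"
    have cc: "ctx S n l m" unfolding ctx_def using S n0 l0 assms(3) by simp
    interpret c: ctx S n l m by (rule cc)
    have "restrict (TT S n l m) (V0 n l m) = S" by (rule c.surj_TT)
    then show "S \<in> (\<lambda>T. restrict T (V0 n l m)) ` EndP n l m" using c.K7 by (metis image_eqI)
  qed
  show ?thesis unfolding bij_betw_def using inj sub sup by blast
qed

end
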